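(* Assume that, under model $M_j$ (true rank $k=j$), the top eigenvalues $\ell_1\ge\ell_2\ge\cdots$ of $X$ satisfy $\ell_i \to \psi_{\sigma}(\lambda_i)$ almost surely for $1 \le i \le j$ and $\ell_i \to 2\sigma$ almost surely for $j < i \le q$, where $\psi_\sigma(x)=x+\sigma^2/x$, and moreover that for any fixed $i>j$, $N^{2/3}(\ell_i - 2\sigma)$ converges in distribution to the GOE Tracy–Widom distribution of order $i-j$. Let $\delta_N$ be a sequence such that $\delta_N \to 0$ and $\delta_N \gg N^{-2/3}$. Then, under the assumption that $q$ and the eigenvalues of $A$ are fixed (do not change with $N$), $\hat{k}_{2 + \delta_N}$ is weakly consistent for $k$, i.e. $\mathbb{P}(\hat{k}_{2 + \delta_N} = k) \to 1$. This is true regardless of whether $\sigma$ is known or unknown.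
   Context: Spiked GOE model $X = A + \sigma G$, where $G$ is an $N\times N$ GOE matrix (symmetric, upper-diagonal entries i.i.d. $\mathcal N(0,1/N)$, diagonal entries i.i.d. $\mathcal N(0,2/N)$), and $A=\sum_{i=1}^k\lambda_i u_iu_i^\top$ is positive semi-definite of rank $k$ with $\lambda_1\ge\cdots\ge\lambda_k>\sigma$. Let $\ell_1\ge\cdots\ge\ell_N$ be the eigenvalues of $X$. Candidate models $M_0,\dots,M_q$, where under $M_j$ the rank is $j$. The generalised AIC scores are: for known $\sigma$, $\mathrm{GAIC}_\gamma(j) = -2\log C_N + \frac{N(N+1)}{2}\log\sigma^2 + \frac{N}{2\sigma^2}\sum_{i>j}\ell_i^2 + \gamma\big(Nj - \frac{j(j-1)}{2}\big)$; for unknown $\sigma$, with $\hat{\sigma}^2_j = \frac{1}{N+1}\sum_{i>j}\ell_i^2$, $\mathrm{GAIC}_\gamma(j) = -2\log C_N + \frac{N(N+1)}{2}\log\hat\sigma^2_j + \frac{N}{2\hat\sigma^2_j}\sum_{i>j}\ell_i^2 + \gamma\big(1+Nj - \frac{j(j-1)}{2}\big)$, where $C_N$ is a normalising constant. The estimator $\hat k_\gamma$ is the minimiser of $\mathrm{GAIC}_\gamma(j)$ over $j\in\{0,1,\dots,q\}$; here $\gamma=2+\delta_N$. *)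

theory Defs
  imports "HOL-Probability.Probability" "Jordan_Normal_Form.Char_Poly"
begin

text \<open>Spiked GOE model X = A + sg G of size N x N.
  g N i j w (for i \<le> j < N) are the upper-triangular GOE entries of G_N;
  u N r (r = 1..k) are the spike directions in R^N (entries indexed 0..N-1);
  lam r (r = 1..k) are the spike strengths.\<close>

definition spiked_X ::
  "nat \<Rightarrow> (nat \<Rightarrow> real) \<Rightarrow> (nat \<Rightarrow> nat \<Rightarrow> nat \<Rightarrow> real) \<Rightarrow> real
   \<Rightarrow> (nat \<Rightarrow> nat \<Rightarrow> nat \<Rightarrow> 'a \<Rightarrow> real) \<Rightarrow> nat \<Rightarrow> 'a \<Rightarrow> real mat" where
  "spiked_X k lam u sg g N w =
     mat N N (\<lambda>(i, j). (\<Sum>r\<in>{1..k}. lam r * u N r i * u N r j)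
                       + sg * g N (min i j) (max i j) w)"

definition eigs_desc :: "real mat \<Rightarrow> real list" where
  "eigs_desc X = rev (sorted_list_of_multiset (proots (char_poly X)))"

text \<open>ell_i, 1-indexed: the i-th largest eigenvalue.\<close>

definition eig :: "real mat \<Rightarrow> nat \<Rightarrow> real" where
  "eig X i = eigs_desc X ! (i - 1)"

definition tail_sq :: "nat \<Rightarrow> real mat \<Rightarrow> nat \<Rightarrow> real" where
  "tail_sq N X j = (\<Sum>i\<in>{j+1..N}. (eig X i)\<^sup>2)"

definition sigma_hat_sq :: "nat \<Rightarrow> real mat \<Rightarrow> nat \<Rightarrow> real" where
  "sigma_hat_sq N X j = tail_sq N X j / (real N + 1)"

definition gaic_known :: "real \<Rightarrow> real \<Rightarrow> real \<Rightarrow> nat \<Rightarrow> real mat \<Rightarrow> nat \<Rightarrow> real" where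
  "gaic_known CN sg gam N X j =
     - 2 * ln CN + real N * (real N + 1) / 2 * ln (sg\<^sup>2)
     + real N / (2 * sg\<^sup>2) * tail_sq N X j
     + gam * (real N * real j - real j * (real j - 1) / 2)"

definition gaic_unknown :: "real \<Rightarrow> real \<Rightarrow> nat \<Rightarrow> real mat \<Rightarrow> nat \<Rightarrow> real" where
  "gaic_unknown CN gam N X j =
     - 2 * ln CN + real N * (real N + 1) / 2 * ln (sigma_hat_sq N X j)
     + real N / (2 * sigma_hat_sq N X j) * tail_sq N X j
     + gam * (1 + real N * real j - real j * (real j - 1) / 2)"

definition argmin_upto :: "(nat \<Rightarrow> real) \<Rightarrow> nat \<Rightarrow> nat" where
  "argmin_upto score q = (LEAST j. j \<le> q \<and> (\<forall>j'\<le>q. score j \<le> score j'))"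

end

theory Submission
  imports Defs "Jordan_Normal_Form.Schur_Decomposition"
begin

lemma map_poly_of_real_prod:
  "map_poly (of_real :: real \<Rightarrow> complex) (\<Prod>e\<leftarrow>es. [:-e,1:]) = (\<Prod>e\<leftarrow>es. [:-of_real e,1:])"
proof -
  interpret p: map_poly_comm_ring_hom "of_real :: real \<Rightarrow> complex" ..
  show ?thesis
  proof (induction es)
    case (Cons e es)
    have "map_poly (of_real :: real \<Rightarrow> complex) ([:-e,1:] * (\<Prod>e\<leftarrow>es. [:-e,1:]))
      = map_poly of_real [:-e,1:] * map_poly of_real (\<Prod>e\<leftarrow>es. [:-e,1:])" by (rule p.hom_mult)
    then show ?case using Cons by simp
  qed simp
qed

lemma map_poly_of_real_inj:
  assumes "map_poly (of_real :: real \<Rightarrow> complex) p = map_poly of_real q"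
  shows "p = q"
proof (rule poly_eqI)
  fix n
  have "coeff (map_poly (of_real :: real \<Rightarrow> complex) p) n = coeff (map_poly of_real q) n"
    using assms by simp
  then show "coeff p n = coeff q n" by (simp add: coeff_map_poly)
qed

lemma sym_eigenvalue_real:
  fixes X :: "real mat" and a :: complex
  assumes X: "X \<in> carrier_mat n n" and sym: "\<And>i j. i < n \<Longrightarrow> j < n \<Longrightarrow> X $$ (i,j) = X $$ (j,i)"
    and ev: "eigenvalue (map_mat complex_of_real X) a"
  shows "Im a = 0"
proof -
  let ?Xc = "map_mat complex_of_real X"
  obtain v where v: "eigenvector ?Xc v a" using ev unfolding eigenvalue_def by blast
  have dr: "dim_row ?Xc = n" "dim_col ?Xc = n" using X by auto
  have vc: "v \<in> carrier_vec n" and v0: "v \<noteq> 0\<^sub>v n" and eq: "?Xc *\<^sub>v v = a \<cdot>\<^sub>v v"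
    using v dr unfolding eigenvector_def by auto
  have dv: "dim_vec v = n" using vc by auto
  have comp: "(\<Sum>j<n. complex_of_real (X $$ (i,j)) * v $ j) = a * v $ i" if "i < n" for i
  proof -
    have "(?Xc *\<^sub>v v) $ i = (a \<cdot>\<^sub>v v) $ i" using eq by simp
    then show ?thesis using that X dv
      by (simp add: scalar_prod_def row_def atLeast0LessThan mult.commute)
  qed
  define s where "s = (\<Sum>i<n. cnj (v $ i) * (\<Sum>j<n. complex_of_real (X $$ (i,j)) * v $ j))"
  define p where "p = (\<Sum>i<n. cnj (v $ i) * v $ i)"
  have "s = (\<Sum>i<n. cnj (v $ i) * (a * v $ i))" unfolding s_def
    by (intro sum.cong) (auto simp: comp)
  also have "\<dots> = a * p" unfolding p_def by (simp add: sum_distrib_left mult.commute mult.left_commute)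
  finally have s_eq: "s = a * p" .
  have "cnj s = (\<Sum>i<n. v $ i * (\<Sum>j<n. complex_of_real (X $$ (i,j)) * cnj (v $ j)))"
    unfolding s_def by (simp add: cnj_sum)
  also have "\<dots> = (\<Sum>i<n. \<Sum>j<n. v $ i * complex_of_real (X $$ (i,j)) * cnj (v $ j))"
    by (simp add: sum_distrib_left mult.assoc)
  also have "\<dots> = (\<Sum>j<n. \<Sum>i<n. v $ i * complex_of_real (X $$ (i,j)) * cnj (v $ j))"
    by (rule sum.swap)
  also have "\<dots> = (\<Sum>j<n. cnj (v $ j) * (\<Sum>i<n. complex_of_real (X $$ (j,i)) * v $ i))"
    by (auto intro!: sum.cong simp: sum_distrib_left sym mult.commute mult.left_commute)
  also have "\<dots> = s" unfolding s_def ..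
  finally have "cnj s = s" .
  then have "Im (cnj s) = Im s" by simp
  then have ims: "Im s = 0" by simp
  have p_real: "p = complex_of_real (\<Sum>i<n. (cmod (v $ i))\<^sup>2)"
    unfolding p_def of_real_sum
    by (intro sum.cong) (auto simp: complex_norm_square simp del: of_real_power)
  obtain i where i: "i < n" "v $ i \<noteq> 0" using v0 vc
    by (metis (no_types, lifting) dv eq_vecI index_zero_vec(1) index_zero_vec(2))
  have "0 < (\<Sum>i<n. (cmod (v $ i))\<^sup>2)"
  proof -
    have "(cmod (v $ i))\<^sup>2 \<le> (\<Sum>i<n. (cmod (v $ i))\<^sup>2)"
      using i by (intro member_le_sum) auto
    moreover have "0 < (cmod (v $ i))\<^sup>2" using i by simp
    ultimately show ?thesis by linarith
  qed
  then show ?thesis using ims s_eq p_real by simp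
qed

lemma sym_char_poly_split:
  fixes X :: "real mat"
  assumes X: "X \<in> carrier_mat n n" and sym: "\<And>i j. i < n \<Longrightarrow> j < n \<Longrightarrow> X $$ (i,j) = X $$ (j,i)"
  shows "\<exists>es. char_poly X = (\<Prod>e\<leftarrow>es. [:-e,1:]) \<and> length es = n"
proof -
  let ?Xc = "map_mat complex_of_real X"
  have Xc: "?Xc \<in> carrier_mat n n" using X by simp
  obtain as where cp: "char_poly ?Xc = (\<Prod>a\<leftarrow>as. [:-a,1:])" and len: "length as = n"
    using char_poly_factorized[OF Xc] by blast
  have re: "Im a = 0" if a: "a \<in> set as" for a
  proof -
    have "poly (char_poly ?Xc) a = 0" unfolding cp using a
      by (auto simp: poly_prod_list prod_list_zero_iff image_iff intro!: bexI[of _ a])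
    then have "eigenvalue ?Xc a" using eigenvalue_root_char_poly[OF Xc] by simp
    then show "Im a = 0" using sym_eigenvalue_real[OF X sym] by blast
  qed
  define es where "es = map Re as"
  have as_eq: "map complex_of_real es = as" unfolding es_def map_map
    by (rule map_idI) (simp add: complex_eq_iff re)
  have "char_poly ?Xc = map_poly complex_of_real (char_poly X)"
    by (rule of_real_hom.char_poly_hom[OF X])
  then have "map_poly complex_of_real (char_poly X) = char_poly ?Xc" by simp
  also have "\<dots> = map_poly of_real (\<Prod>e\<leftarrow>es. [:-e,1:])"
    unfolding cp map_poly_of_real_prod as_eq[symmetric] by (simp add: o_def)
  finally have cpX: "char_poly X = (\<Prod>e\<leftarrow>es. [:-e,1:])" by (rule map_poly_of_real_inj)
  have "length es = n" using len by (simp add: es_def)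
  with cpX show ?thesis by blast
qed

lemma trace_sim_real:
  fixes P C Q :: "real mat"
  assumes P: "P \<in> carrier_mat n n" and C: "C \<in> carrier_mat n n" and Q: "Q \<in> carrier_mat n n"
    and QP: "Q * P = 1\<^sub>m n"
  shows "(\<Sum>i<n. (P * C * Q) $$ (i,i)) = (\<Sum>i<n. C $$ (i,i))"
proof -
  have QPe: "(\<Sum>i<n. Q $$ (k,i) * P $$ (i,j)) = (if k = j then 1 else 0)" if "k < n" "j < n" for k j
  proof -
    have "(Q * P) $$ (k,j) = (\<Sum>i<n. Q $$ (k,i) * P $$ (i,j))"
      using that P Q by (simp add: scalar_prod_def row_def col_def atLeast0LessThan)
    then show ?thesis using QP that by simp
  qed
  have "(\<Sum>i<n. (P * C * Q) $$ (i,i)) = (\<Sum>i<n. \<Sum>j<n. P $$ (i,j) * (\<Sum>k<n. C $$ (j,k) * Q $$ (k,i)))"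
    using P C Q by (intro sum.cong) (auto simp: scalar_prod_def row_def col_def atLeast0LessThan)
  also have "\<dots> = (\<Sum>i<n. \<Sum>j<n. \<Sum>k<n. C $$ (j,k) * (Q $$ (k,i) * P $$ (i,j)))"
    by (simp add: sum_distrib_left mult_ac)
  also have "\<dots> = (\<Sum>j<n. \<Sum>i<n. \<Sum>k<n. C $$ (j,k) * (Q $$ (k,i) * P $$ (i,j)))"
    by (rule sum.swap)
  also have "\<dots> = (\<Sum>j<n. \<Sum>k<n. \<Sum>i<n. C $$ (j,k) * (Q $$ (k,i) * P $$ (i,j)))"
    by (rule sum.cong[OF refl], rule sum.swap)
  also have "\<dots> = (\<Sum>j<n. \<Sum>k<n. C $$ (j,k) * (if k = j then 1 else 0))"
    by (intro sum.cong refl) (simp add: sum_distrib_left[symmetric] QPe)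
  also have "\<dots> = (\<Sum>j<n. \<Sum>k<n. if k = j then C $$ (j,j) else 0)"
    by (intro sum.cong refl) auto
  also have "\<dots> = (\<Sum>j<n. C $$ (j,j))"
    by simp
  finally show ?thesis .
qed

lemma char_poly_sum_sq:
  fixes X :: "real mat"
  assumes X: "X \<in> carrier_mat n n" and cp: "char_poly X = (\<Prod>e\<leftarrow>es. [:-e,1:])"
  shows "(\<Sum>e\<leftarrow>es. e\<^sup>2) = (\<Sum>i<n. \<Sum>j<n. X $$ (i,j) * X $$ (j,i))"
proof -
  obtain B P Q where sd: "schur_decomposition X es = (B,P,Q)"
    by (cases "schur_decomposition X es") auto
  from schur_decomposition[OF X cp sd]
  have sim: "similar_mat_wit X B P Q" and ut: "upper_triangular B" and dg: "diag_mat B = es" by auto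
  note D = similar_mat_witD2[OF X sim]
  have B: "B \<in> carrier_mat n n" and P: "P \<in> carrier_mat n n" and Q: "Q \<in> carrier_mat n n"
    and QP: "Q * P = 1\<^sub>m n" and XE: "X = P * B * Q" using D by auto
  have QPY: "Q * (P * Y) = Y" if "Y \<in> carrier_mat n n" for Y
  proof -
    have "Q * (P * Y) = (Q * P) * Y" using P Q that by simp
    then show ?thesis using QP that by simp
  qed
  have BQ: "B * Q \<in> carrier_mat n n" using B Q by simp
  have PBQ: "P * (B * Q) \<in> carrier_mat n n" using P BQ by simp
  have "X * X = (P * (B * Q)) * (P * (B * Q))" unfolding XE using P B Q by simp
  also have "\<dots> = P * ((B * Q) * (P * (B * Q)))" using P BQ PBQ by (rule assoc_mult_mat)
  also have "(B * Q) * (P * (B * Q)) = B * (Q * (P * (B * Q)))" using B Q PBQ by (rule assoc_mult_mat)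
  also have "Q * (P * (B * Q)) = B * Q" using QPY[OF BQ] .
  also have "B * (B * Q) = (B * B) * Q" using B Q by simp
  also have "P * ((B * B) * Q) = (P * (B * B)) * Q" using P B Q
    by (subst assoc_mult_mat[of P n n "B*B" n Q n]) auto
  finally have XX: "X * X = P * (B * B) * Q" .
  have "(\<Sum>i<n. \<Sum>j<n. X $$ (i,j) * X $$ (j,i)) = (\<Sum>i<n. (X * X) $$ (i,i))"
    using X by (intro sum.cong) (auto simp: scalar_prod_def row_def col_def atLeast0LessThan)
  also have "\<dots> = (\<Sum>i<n. (B * B) $$ (i,i))"
    unfolding XX by (rule trace_sim_real[OF P _ Q QP]) (use B in simp)
  also have "\<dots> = (\<Sum>i<n. (B $$ (i,i))\<^sup>2)"
  proof (intro sum.cong refl)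
    fix i assume i: "i \<in> {..<n}"
    have "(B * B) $$ (i,i) = (\<Sum>k<n. B $$ (i,k) * B $$ (k,i))"
      using B i by (simp add: scalar_prod_def row_def col_def atLeast0LessThan)
    also have "\<dots> = B $$ (i,i) * B $$ (i,i)"
    proof -
      have z: "B $$ (i,k) * B $$ (k,i) = 0" if "k < n" "k \<noteq> i" for k
      proof (cases "k < i")
        case True then show ?thesis using ut B i by (auto simp: upper_triangular_def)
      next
        case False then have "i < k" using that by simp
        then show ?thesis using ut B that by (auto simp: upper_triangular_def)
      qed
      have "(\<Sum>k<n. B $$ (i,k) * B $$ (k,i)) = B $$ (i,i) * B $$ (i,i) + (\<Sum>k\<in>{..<n}-{i}. B $$ (i,k) * B $$ (k,i))"
        using i by (simp add: sum.remove)
      also have "(\<Sum>k\<in>{..<n}-{i}. B $$ (i,k) * B $$ (k,i)) = 0"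
        by (rule sum.neutral) (auto simp: z)
      finally show ?thesis by simp
    qed
    finally show "(B * B) $$ (i,i) = (B $$ (i,i))\<^sup>2" by (simp add: power2_eq_square)
  qed
  also have "\<dots> = (\<Sum>e\<leftarrow>es. e\<^sup>2)"
    unfolding dg[symmetric] diag_mat_def using B
    by (simp add: atLeast0LessThan[symmetric] interv_sum_list_conv_sum_set_nat)
  finally show ?thesis ..
qed

lemma sum_list_map_mset_eq:
  assumes "mset xs = mset ys"
  shows "sum_list (map f xs) = (sum_list (map f ys) :: 'b :: comm_monoid_add)"
proof -
  have "sum_list (map f xs) = sum_mset (image_mset f (mset xs))"
    by (simp add: sum_mset_sum_list[symmetric])
  also have "\<dots> = sum_mset (image_mset f (mset ys))" using assms by simp
  also have "\<dots> = sum_list (map f ys)" by (simp add: sum_mset_sum_list[symmetric])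
  finally show ?thesis .
qed

lemma proots_linear_prod: "proots (\<Prod>e\<leftarrow>es. [:-e,1::real:]) = mset es"
proof (induction es)
  case (Cons e es)
  have "proots (\<Prod>e\<leftarrow>e # es. [:-e,1::real:]) = proots ([:-e,1:] * (\<Prod>e\<leftarrow>es. [:-e,1:]))" by simp
  also have "\<dots> = proots [:-e,1:] + proots (\<Prod>e\<leftarrow>es. [:-e,1::real:])"
    by (rule proots_mult) (auto simp: prod_list_zero_iff)
  also have "proots [:-e,1::real:] = {#e#}" using proots_linear_factor[of "-e"] by simp
  finally show ?case using Cons by simp
qed simp

lemma sym_eigs:
  fixes X :: "real mat"
  assumes X: "X \<in> carrier_mat N N" and symX: "\<And>i j. i < N \<Longrightarrow> j < N \<Longrightarrow> X $$ (i,j) = X $$ (j,i)"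
  shows "length (eigs_desc X) = N"
    and "tail_sq N X 0 = (\<Sum>i<N. \<Sum>j<N. (X $$ (i,j))\<^sup>2)"
proof -
  obtain es where cp: "char_poly X = (\<Prod>e\<leftarrow>es. [:-e,1:])" and len: "length es = N"
    using sym_char_poly_split[OF X symX] by blast
  have me: "mset (eigs_desc X) = mset es"
    unfolding eigs_desc_def cp proots_linear_prod by simp
  show l: "length (eigs_desc X) = N" using me len by (metis size_mset)
  have "tail_sq N X 0 = (\<Sum>i<N. (eigs_desc X ! i)\<^sup>2)"
    unfolding tail_sq_def eig_def by (simp add: sum.atLeast1_atMost_eq)
  also have "\<dots> = sum_list (map (\<lambda>x. x\<^sup>2) (eigs_desc X))"
    using l by (simp add: sum_list_sum_nth atLeast0LessThan)
  also have "\<dots> = sum_list (map (\<lambda>x. x\<^sup>2) es)" by (rule sum_list_map_mset_eq[OF me])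
  also have "\<dots> = (\<Sum>i<N. \<Sum>j<N. X $$ (i,j) * X $$ (j,i))" by (rule char_poly_sum_sq[OF X cp])
  also have "\<dots> = (\<Sum>i<N. \<Sum>j<N. (X $$ (i,j))\<^sup>2)"
    by (intro sum.cong refl) (simp add: symX power2_eq_square)
  finally show "tail_sq N X 0 = (\<Sum>i<N. \<Sum>j<N. (X $$ (i,j))\<^sup>2)" .
qed


lemma argmin_iff:
  "argmin_upto f q = k \<longleftrightarrow>
     (k \<le> q \<and> (\<forall>j'\<le>q. f k \<le> f j') \<and> (\<forall>j<k. \<not> (j \<le> q \<and> (\<forall>j'\<le>q. f j \<le> f j'))))"
proof -
  define P where "P j \<longleftrightarrow> j \<le> q \<and> (\<forall>j'\<le>q. f j \<le> f j')" for j
  have ex: "\<exists>j. P j"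
  proof -
    have fin: "finite (f ` {..q})" and ne: "f ` {..q} \<noteq> {}" by auto
    have "Min (f ` {..q}) \<in> f ` {..q}" using Min_in[OF fin ne] .
    then obtain j where j: "j \<le> q" "Min (f ` {..q}) = f j" by (metis atMost_iff imageE)
    have "\<forall>j'\<le>q. f j \<le> f j'" using j(2)[symmetric] fin by auto
    then show ?thesis using j(1) unfolding P_def by blast
  qed
  have "argmin_upto f q = (LEAST j. P j)" unfolding argmin_upto_def P_def ..
  moreover have "(LEAST j. P j) = k \<longleftrightarrow> P k \<and> (\<forall>j<k. \<not> P j)"
  proof
    assume h: "(LEAST j. P j) = k"
    have "P (LEAST j. P j)" by (rule LeastI_ex[OF ex])
    then have pk: "P k" using h by simp
    have "\<not> P j" if "j < k" for j using not_less_Least[of j P] that h by simp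
    then show "P k \<and> (\<forall>j<k. \<not> P j)" using pk by blast
  next
    assume h: "P k \<and> (\<forall>j<k. \<not> P j)"
    show "(LEAST j. P j) = k"
    proof (rule Least_equality)
      show "P k" using h by blast
    next
      fix y assume "P y"
      then show "k \<le> y" using h by (meson not_le)
    qed
  qed
  ultimately have "argmin_upto f q = k \<longleftrightarrow> P k \<and> (\<forall>j<k. \<not> P j)" by simp
  then show ?thesis by (simp only: P_def conj_assoc)
qed

lemma argmin_vshape:
  fixes f :: "nat \<Rightarrow> real"
  assumes kq: "k \<le> q"
    and dec: "\<And>j. 1 \<le> j \<Longrightarrow> j \<le> k \<Longrightarrow> f j < f (j - 1)"
    and inc: "\<And>j. k < j \<Longrightarrow> j \<le> q \<Longrightarrow> f (j - 1) < f j"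
  shows "argmin_upto f q = k"
proof -
  have dch: "f k < f j" if "j + Suc d = k" for d j
    using that
  proof (induction d arbitrary: j)
    case 0
    then show ?case using dec[of k] by auto
  next
    case (Suc d)
    have "f k < f (Suc j)" using Suc.IH[of "Suc j"] Suc.prems by simp
    also have "f (Suc j) < f j" using dec[of "Suc j"] Suc.prems by simp
    finally show ?case .
  qed
  have ich: "f k < f (k + Suc d)" if "k + Suc d \<le> q" for d
    using that
  proof (induction d)
    case 0
    then show ?case using inc[of "Suc k"] by auto
  next
    case (Suc d)
    have "f k < f (k + Suc d)" using Suc.IH Suc.prems by simp
    also have "f (k + Suc d) < f (k + Suc (Suc d))" using inc[of "k + Suc (Suc d)"] Suc.prems by simp
    finally show ?case .
  qed
  have lt: "f k < f j" if "j \<le> q" "j \<noteq> k" for j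
  proof (cases "j < k")
    case True
    have "j + Suc (k - j - 1) = k" using True by simp
    then show ?thesis by (rule dch)
  next
    case False
    have d: "j = k + Suc (j - k - 1)" using False that by simp
    have "f k < f (k + Suc (j - k - 1))" using ich[of "j - k - 1"] d that by simp
    then show ?thesis using d by simp
  qed
  show ?thesis unfolding argmin_iff
  proof (intro conjI allI impI)
    show "k \<le> q" by (rule kq)
  next
    fix j' assume "j' \<le> q"
    then show "f k \<le> f j'" using lt[of j'] by (cases "j' = k") auto
  next
    fix j assume j: "j < k"
    show "\<not> (j \<le> q \<and> (\<forall>j'\<le>q. f j \<le> f j'))"
    proof
      assume h: "j \<le> q \<and> (\<forall>j'\<le>q. f j \<le> f j')"
      then have "f j \<le> f k" using kq by blast
      moreover have "f k < f j" using lt[of j] h j by simp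
      ultimately show False by simp
    qed
  qed
qed

lemma tail_split:
  assumes "1 \<le> j" "j \<le> N"
  shows "tail_sq N X (j - 1) = (eig X j)\<^sup>2 + tail_sq N X j"
proof -
  have "{j - 1 + 1..N} = {j..N}" using assms by auto
  then show ?thesis unfolding tail_sq_def using assms by (simp add: sum.atLeast_Suc_atMost)
qed

lemma tail_nonneg: "0 \<le> tail_sq N X j"
  unfolding tail_sq_def by (simp add: sum_nonneg)

lemma tail_mono:
  assumes "j \<le> j'"
  shows "tail_sq N X j' \<le> tail_sq N X j"
  unfolding tail_sq_def using assms by (intro sum_mono2) auto

lemma gk_diff:
  assumes "1 \<le> j" "j \<le> N"
  shows "gaic_known C s g N X j - gaic_known C s g N X (j - 1)
        = - real N / (2 * s\<^sup>2) * (eig X j)\<^sup>2 + g * (real N - real j + 1)"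
  using assms unfolding gaic_known_def tail_split[OF assms]
  by (simp add: of_nat_diff algebra_simps add_divide_distrib diff_divide_distrib)

lemma gu_diff:
  assumes "1 \<le> j" "j \<le> N" "0 < tail_sq N X j" "0 < tail_sq N X (j - 1)"
  shows "gaic_unknown C g N X j - gaic_unknown C g N X (j - 1)
        = real N * (real N + 1) / 2 * (ln (tail_sq N X j) - ln (tail_sq N X (j - 1)))
          + g * (real N - real j + 1)"
proof -
  have l1: "ln (sigma_hat_sq N X j) = ln (tail_sq N X j) - ln (real N + 1)"
    unfolding sigma_hat_sq_def using assms by (simp add: ln_div)
  have l2: "ln (sigma_hat_sq N X (j - 1)) = ln (tail_sq N X (j - 1)) - ln (real N + 1)"
    unfolding sigma_hat_sq_def using assms by (simp add: ln_div)
  have t1: "real N / (2 * sigma_hat_sq N X j) * tail_sq N X j = real N * (real N + 1) / 2"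
    unfolding sigma_hat_sq_def using assms by (simp add: field_simps)
  have t2: "real N / (2 * sigma_hat_sq N X (j - 1)) * tail_sq N X (j - 1) = real N * (real N + 1) / 2"
    unfolding sigma_hat_sq_def using assms by (simp add: field_simps)
  show ?thesis unfolding gaic_unknown_def l1 l2 t1 t2 using assms
    by (simp add: of_nat_diff algebra_simps add_divide_distrib diff_divide_distrib)
qed

lemma det_known:
  assumes kq: "k \<le> q" and qN: "q \<le> N" and s: "0 < s"
    and dec: "\<And>j. 1 \<le> j \<Longrightarrow> j \<le> k \<Longrightarrow> 2 * s\<^sup>2 * g * (real N - real j + 1) < real N * (eig X j)\<^sup>2"
    and inc: "\<And>j. k < j \<Longrightarrow> j \<le> q \<Longrightarrow> real N * (eig X j)\<^sup>2 < 2 * s\<^sup>2 * g * (real N - real j + 1)"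
  shows "argmin_upto (gaic_known C s g N X) q = k"
proof (rule argmin_vshape[OF kq])
  have eq: "- real N / (2 * s\<^sup>2) * (eig X j)\<^sup>2 + g * (real N - real j + 1)
      = (2 * s\<^sup>2 * g * (real N - real j + 1) - real N * (eig X j)\<^sup>2) / (2 * s\<^sup>2)" for j
    using s by (simp add: field_simps)
  have s2: "0 < 2 * s\<^sup>2" using s by simp
  fix j
  {
    assume j: "1 \<le> j" "j \<le> k"
    have "gaic_known C s g N X j - gaic_known C s g N X (j - 1)
        = (2 * s\<^sup>2 * g * (real N - real j + 1) - real N * (eig X j)\<^sup>2) / (2 * s\<^sup>2)"
      using gk_diff[OF j(1), of N C s g X] j qN kq eq[of j] by simp
    also have "\<dots> < 0" using dec[OF j] s2 by (simp add: divide_neg_pos)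
    finally have "gaic_known C s g N X j - gaic_known C s g N X (j - 1) < 0" .
    then show "gaic_known C s g N X j < gaic_known C s g N X (j - 1)" by simp
  }
  {
    assume j: "k < j" "j \<le> q"
    have "gaic_known C s g N X j - gaic_known C s g N X (j - 1)
        = (2 * s\<^sup>2 * g * (real N - real j + 1) - real N * (eig X j)\<^sup>2) / (2 * s\<^sup>2)"
      using gk_diff[of j N C s g X] j qN kq eq[of j] by simp
    moreover have "0 < (2 * s\<^sup>2 * g * (real N - real j + 1) - real N * (eig X j)\<^sup>2) / (2 * s\<^sup>2)"
      using inc[OF j] s2 by simp
    ultimately have "0 < gaic_known C s g N X j - gaic_known C s g N X (j - 1)" by simp
    then show "gaic_known C s g N X (j - 1) < gaic_known C s g N X j" by simp
  }
qed

lemma det_unknown: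
  assumes kq: "k \<le> q" and qN: "q \<le> N" and Tq: "0 < tail_sq N X q"
    and dec: "\<And>j. 1 \<le> j \<Longrightarrow> j \<le> k \<Longrightarrow>
       2 * g * (real N - real j + 1) * tail_sq N X (j - 1) < real N * (real N + 1) * (eig X j)\<^sup>2"
    and inc: "\<And>j. k < j \<Longrightarrow> j \<le> q \<Longrightarrow>
       real N * (real N + 1) * (eig X j)\<^sup>2 < 2 * g * (real N - real j + 1) * tail_sq N X j"
  shows "argmin_upto (gaic_unknown C g N X) q = k"
proof (rule argmin_vshape[OF kq])
  have Tpos: "0 < tail_sq N X j" if "j \<le> q" for j
    using tail_mono[OF that, of N X] Tq by simp
  define c where "c = real N * (real N + 1) / 2"
  have c0: "0 \<le> c" unfolding c_def by simp
  fix j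
  {
    assume j: "1 \<le> j" "j \<le> k"
    have jq: "j \<le> q" "j - 1 \<le> q" using j kq by auto
    have T1: "0 < tail_sq N X j" and T0: "0 < tail_sq N X (j - 1)" using Tpos jq by auto
    have sp: "tail_sq N X (j - 1) = (eig X j)\<^sup>2 + tail_sq N X j"
      using tail_split[of j N X] j kq qN by simp
    have "ln (tail_sq N X j) - ln (tail_sq N X (j - 1)) = ln (tail_sq N X j / tail_sq N X (j - 1))"
      using T1 T0 by (simp add: ln_div)
    also have "\<dots> \<le> tail_sq N X j / tail_sq N X (j - 1) - 1"
      using T1 T0 by (intro ln_le_minus_one) simp
    also have "\<dots> = - (eig X j)\<^sup>2 / tail_sq N X (j - 1)"
      using T0 unfolding sp by (simp add: field_simps)
    finally have l: "ln (tail_sq N X j) - ln (tail_sq N X (j - 1)) \<le> - (eig X j)\<^sup>2 / tail_sq N X (j - 1)" .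
    have d: "g * (real N - real j + 1) < c * ((eig X j)\<^sup>2 / tail_sq N X (j - 1))"
      using dec[OF j] T0 unfolding c_def by (simp add: field_simps)
    have "gaic_unknown C g N X j - gaic_unknown C g N X (j - 1)
        = c * (ln (tail_sq N X j) - ln (tail_sq N X (j - 1))) + g * (real N - real j + 1)"
      unfolding c_def using gu_diff[OF j(1) _ T1 T0] j kq qN by simp
    also have "\<dots> \<le> c * (- (eig X j)\<^sup>2 / tail_sq N X (j - 1)) + g * (real N - real j + 1)"
      using mult_left_mono[OF l c0] by simp
    also have "\<dots> < 0" using d by simp
    finally show "gaic_unknown C g N X j < gaic_unknown C g N X (j - 1)" by simp
  }
  {
    assume j: "k < j" "j \<le> q"
    have j1: "1 \<le> j" using j by simp
    have T1: "0 < tail_sq N X j" and T0: "0 < tail_sq N X (j - 1)" using Tpos j by auto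
    have sp: "tail_sq N X (j - 1) = (eig X j)\<^sup>2 + tail_sq N X j"
      using tail_split[of j N X] j qN by simp
    have "- (eig X j)\<^sup>2 / tail_sq N X j = - (tail_sq N X (j - 1) / tail_sq N X j - 1)"
      using T1 unfolding sp by (simp add: field_simps)
    also have "\<dots> \<le> - ln (tail_sq N X (j - 1) / tail_sq N X j)"
      using ln_le_minus_one[of "tail_sq N X (j - 1) / tail_sq N X j"] T1 T0 by simp
    also have "\<dots> = ln (tail_sq N X j) - ln (tail_sq N X (j - 1))"
      using T1 T0 by (simp add: ln_div)
    finally have l: "- (eig X j)\<^sup>2 / tail_sq N X j \<le> ln (tail_sq N X j) - ln (tail_sq N X (j - 1))" .
    have d: "c * ((eig X j)\<^sup>2 / tail_sq N X j) < g * (real N - real j + 1)"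
      using inc[OF j] T1 unfolding c_def by (simp add: field_simps)
    have "0 < c * (- (eig X j)\<^sup>2 / tail_sq N X j) + g * (real N - real j + 1)" using d by simp
    also have "\<dots> \<le> c * (ln (tail_sq N X j) - ln (tail_sq N X (j - 1))) + g * (real N - real j + 1)"
      using mult_left_mono[OF l c0] by simp
    also have "\<dots> = gaic_unknown C g N X j - gaic_unknown C g N X (j - 1)"
      unfolding c_def using gu_diff[OF j1 _ T1 T0] j qN by simp
    finally show "gaic_unknown C g N X (j - 1) < gaic_unknown C g N X j" by simp
  }
qed


lemma ineq_spike:
  fixes sg d eta l psi m :: real
  assumes sg: "0 < sg" and d: "0 < d" "d \<le> eta" and l: "\<bar>l - psi\<bar> < eta"
    and m: "m \<le> psi" and mm: "2 * sg * (1 + eta) < m - eta"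
  shows "2 * (2 + d) * sg\<^sup>2 * (1 + eta) < l\<^sup>2"
proof -
  have eta: "0 < eta" using d by simp
  have l1: "2 * sg * (1 + eta) < l" using l m mm by (simp add: abs_less_iff)
  have p: "0 < 2 * sg * (1 + eta)" using sg eta by simp
  have "(2 * sg * (1 + eta))\<^sup>2 < l\<^sup>2" using l1 p by (simp add: power_strict_mono)
  moreover have "2 * (2 + d) * sg\<^sup>2 * (1 + eta) \<le> (2 * sg * (1 + eta))\<^sup>2"
  proof -
    have "2 * (2 + d) * (1 + eta) \<le> 4 * (1 + eta)\<^sup>2"
    proof -
      have "2 * (2 + d) * (1 + eta) \<le> 2 * (2 + eta) * (1 + eta)"
        using d eta by (intro mult_right_mono) auto
      also have "\<dots> \<le> 4 * (1 + eta)\<^sup>2" using eta by (simp add: power2_eq_square algebra_simps)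
      finally show ?thesis .
    qed
    then have "sg\<^sup>2 * (2 * (2 + d) * (1 + eta)) \<le> sg\<^sup>2 * (4 * (1 + eta)\<^sup>2)"
      by (intro mult_left_mono) auto
    then show ?thesis by (simp add: power2_eq_square algebra_simps)
  qed
  ultimately show ?thesis by linarith
qed

lemma poly_d1:
  fixes d :: real
  assumes "0 < d" "d \<le> 1"
  shows "(1 + d / 32)\<^sup>2 < (1 + d / 2) * (1 - d / 16) * (1 - d / 8)"
proof -
  have dd: "d * d \<le> d" using assms by (simp add: mult_left_le)
  have ddd: "d * d * d \<ge> 0" using assms by simp
  have e: "(1 + d / 2) * (1 - d / 16) * (1 - d / 8) - (1 + d / 32)\<^sup>2
      = d / 4 - 89 * (d * d) / 1024 + d * d * d / 256"
    by (simp add: power2_eq_square field_simps)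
  show ?thesis using assms dd ddd e by linarith
qed

lemma poly_d2:
  fixes d :: real
  assumes "0 < d" "d \<le> 1"
  shows "(1 + d / 32)\<^sup>2 < (1 + d / 2) * (1 - d / 16)"
proof -
  have dd: "d * d \<le> d" using assms by (simp add: mult_left_le)
  have e: "(1 + d / 2) * (1 - d / 16) - (1 + d / 32)\<^sup>2 = 3 * d / 8 - 33 * (d * d) / 1024"
    by (simp add: power2_eq_square field_simps)
  show ?thesis using assms dd e by linarith
qed

lemma bulk_sq:
  fixes sg d l :: real
  assumes sg: "0 < sg" and d: "0 < d" "d \<le> 1" and l: "\<bar>l - 2 * sg\<bar> < sg * d / 16"
  shows "l\<^sup>2 < 4 * sg\<^sup>2 * (1 + d / 32)\<^sup>2"
proof -
  have "sg * d \<le> sg" using sg d by (simp add: mult_left_le)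
  moreover have "- (sg * d / 16) < l - 2 * sg" using l by linarith
  ultimately have l0: "0 \<le> l" using sg by linarith
  have "l < 2 * sg + sg * d / 16" using l by linarith
  then have l1: "l < 2 * sg * (1 + d / 32)" by (simp add: algebra_simps)
  have "l\<^sup>2 < (2 * sg * (1 + d / 32))\<^sup>2" using l0 l1 by (simp add: power_strict_mono)
  then show ?thesis by (simp add: power_mult_distrib)
qed

lemma ineq_bulk_known:
  fixes sg d l n D :: real
  assumes sg: "0 < sg" and d: "0 < d" "d \<le> 1" and l: "\<bar>l - 2 * sg\<bar> < sg * d / 16"
    and n: "0 < n" and D: "n * (1 - d / 16) \<le> D"
  shows "n * l\<^sup>2 < 2 * sg\<^sup>2 * (2 + d) * D"
proof -
  have "n * l\<^sup>2 < n * (4 * sg\<^sup>2 * (1 + d / 32)\<^sup>2)"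
    using bulk_sq[OF sg d l] n by simp
  also have "\<dots> < n * (4 * sg\<^sup>2 * ((1 + d / 2) * (1 - d / 16)))"
    using poly_d2[OF d] n sg by simp
  also have "\<dots> = 2 * sg\<^sup>2 * (2 + d) * (n * (1 - d / 16))" by (simp add: field_simps)
  also have "\<dots> \<le> 2 * sg\<^sup>2 * (2 + d) * D"
    using D sg d by (intro mult_left_mono) auto
  finally show ?thesis .
qed

lemma ineq_bulk_unknown:
  fixes sg d l n D T :: real
  assumes sg: "0 < sg" and d: "0 < d" "d \<le> 1" and l: "\<bar>l - 2 * sg\<bar> < sg * d / 16"
    and n: "0 < n" and D: "n * (1 - d / 16) \<le> D" and T: "(n + 1) * sg\<^sup>2 * (1 - d / 8) \<le> T"
  shows "n * (n + 1) * l\<^sup>2 < 2 * (2 + d) * D * T"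
proof -
  have d16: "0 \<le> n * (1 - d / 16)" using d n by simp
  have d8: "0 \<le> (n + 1) * sg\<^sup>2 * (1 - d / 8)" using d n by simp
  have "n * (n + 1) * l\<^sup>2 < n * (n + 1) * (4 * sg\<^sup>2 * (1 + d / 32)\<^sup>2)"
    using bulk_sq[OF sg d l] n by simp
  also have "\<dots> < n * (n + 1) * (4 * sg\<^sup>2 * ((1 + d / 2) * (1 - d / 16) * (1 - d / 8)))"
    using poly_d1[OF d] n sg by (simp add: mult.assoc)
  also have "\<dots> = 2 * (2 + d) * (n * (1 - d / 16)) * ((n + 1) * sg\<^sup>2 * (1 - d / 8))"
    by (simp add: field_simps)
  also have "\<dots> \<le> 2 * (2 + d) * D * T"
    using D T d16 d8 d by (intro mult_mono) auto
  finally show ?thesis .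
qed


lemma ae_conv_prob:
  assumes M: "prob_space M" and meas: "\<And>n. X n \<in> borel_measurable M"
    and ae: "AE w in M. (\<lambda>n. X n w) \<longlonglongrightarrow> c" and eta: "0 < (\<eta>::real)"
  shows "(\<lambda>n. measure M {w\<in>space M. \<eta> \<le> \<bar>X n w - c\<bar>}) \<longlonglongrightarrow> 0"
proof -
  interpret prob_space M by (rule M)
  define S where "S n = {w\<in>space M. \<eta> \<le> \<bar>X n w - c\<bar>}" for n
  have S_sets: "S n \<in> sets M" for n unfolding S_def using meas[of n] by measurable
  have "(\<lambda>n. \<integral>w. indicator (S n) w \<partial>M) \<longlonglongrightarrow> (\<integral>w. (0::real) \<partial>M)"
  proof (rule integral_dominated_convergence[where w="\<lambda>_. 1"])
    show "(\<lambda>w. 0::real) \<in> borel_measurable M" by simp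
    show "(\<lambda>w. indicator (S n) w :: real) \<in> borel_measurable M" for n
      using S_sets by simp
    show "integrable M (\<lambda>_. 1::real)" by simp
    show "AE w in M. (\<lambda>n. indicator (S n) w :: real) \<longlonglongrightarrow> 0"
      using ae
    proof (rule eventually_mono)
      fix w assume lim: "(\<lambda>n. X n w) \<longlonglongrightarrow> c"
      have "\<forall>\<^sub>F n in sequentially. dist (X n w) c < \<eta>"
        using lim eta by (rule tendstoD)
      then have "\<forall>\<^sub>F n in sequentially. (indicator (S n) w :: real) = 0"
        by eventually_elim (auto simp: S_def dist_real_def indicator_def)
      then show "(\<lambda>n. indicator (S n) w :: real) \<longlonglongrightarrow> 0"
        by (rule tendsto_eventually)
    qed
    show "AE w in M. norm (indicator (S n) w :: real) \<le> 1" for n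
      by (auto simp: indicator_def)
  qed
  then show ?thesis using S_sets by (simp add: S_def[symmetric])
qed

lemma weak_conv_tail:
  assumes M: "prob_space M" and meas: "\<And>n. Y n \<in> borel_measurable M"
    and wc: "weak_conv_m (\<lambda>n. distr M borel (Y n)) \<mu>" and mu: "real_distribution \<mu>"
    and t: "filterlim t at_top sequentially"
  shows "(\<lambda>n. measure M {w\<in>space M. t n \<le> \<bar>Y n w\<bar>}) \<longlonglongrightarrow> 0"
proof -
  interpret prob_space M by (rule M)
  interpret mu: real_distribution \<mu> by (rule mu)
  define F where "F = cdf \<mu>"
  define G where "G n x = measure M {w\<in>space M. Y n w \<le> x}" for n x
  have G_eq: "cdf (distr M borel (Y n)) x = G n x" for n x
  proof -
    have "cdf (distr M borel (Y n)) x = measure M (Y n -` {..x} \<inter> space M)"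
      unfolding cdf_def using meas[of n] by (simp add: measure_distr)
    also have "Y n -` {..x} \<inter> space M = {w\<in>space M. Y n w \<le> x}" by auto
    finally show ?thesis unfolding G_def .
  qed
  have conv: "isCont F x \<Longrightarrow> (\<lambda>n. G n x) \<longlonglongrightarrow> F x" for x
    using wc unfolding weak_conv_m_def weak_conv_def F_def G_eq by blast
  have monoF: "mono F" unfolding F_def by (auto intro: monoI mu.cdf_nondecreasing)
  have cnt: "countable {a. \<not> isCont F a}" by (rule mono_ctble_discont[OF monoF])
  define P where "P n = measure M {w\<in>space M. t n \<le> \<bar>Y n w\<bar>}" for n
  have P_nn: "0 \<le> P n" for n unfolding P_def by simp
  have ev: "\<forall>\<^sub>F n in sequentially. P n < e" if e: "0 < e" for e
  proof -
    define \<epsilon> where "\<epsilon> = e / 4"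
    have eps: "0 < \<epsilon>" using e by (simp add: \<epsilon>_def)
    have "\<forall>\<^sub>F x in at_bot. F x < \<epsilon>"
      using mu.cdf_lim_at_bot eps unfolding F_def by (rule order_tendstoD)
    then obtain a0 where a0: "\<And>x. x \<le> a0 \<Longrightarrow> F x < \<epsilon>" by (auto simp: eventually_at_bot_linorder)
    obtain a where a: "a \<in> {..<a0}" "a \<notin> {a. \<not> isCont F a}"
      using open_minus_countable[OF cnt, of "{..<a0}"] by auto
    have "\<forall>\<^sub>F x in at_top. 1 - \<epsilon> < F x"
      using mu.cdf_lim_at_top_prob eps unfolding F_def by (intro order_tendstoD) auto
    then obtain b0 where b0: "\<And>x. x \<ge> b0 \<Longrightarrow> 1 - \<epsilon> < F x" by (auto simp: eventually_at_top_linorder)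
    obtain b where b: "b \<in> {b0<..}" "b \<notin> {a. \<not> isCont F a}"
      using open_minus_countable[OF cnt, of "{b0<..}"] by auto
    have Fa: "F a < \<epsilon>" using a a0 by auto
    have Fb: "1 - \<epsilon> < F b" using b b0 by auto
    have e1: "\<forall>\<^sub>F n in sequentially. G n a < F a + \<epsilon>"
      using conv[of a] a eps by (intro order_tendstoD) auto
    have e2: "\<forall>\<^sub>F n in sequentially. F b - \<epsilon> < G n b"
      using conv[of b] b eps by (intro order_tendstoD) auto
    have "\<forall>Z. \<forall>\<^sub>F n in sequentially. Z < t n"
      using t by (simp add: filterlim_at_top_dense)
    then have e3: "\<forall>\<^sub>F n in sequentially. max \<bar>a\<bar> \<bar>b\<bar> < t n" by blast
    show ?thesis using e1 e2 e3
    proof eventually_elim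
      case (elim n)
      have sub: "{w\<in>space M. t n \<le> \<bar>Y n w\<bar>} \<subseteq> {w\<in>space M. Y n w \<le> a} \<union> (space M - {w\<in>space M. Y n w \<le> b})"
        using elim(3) by auto
      have s1: "{w\<in>space M. Y n w \<le> a} \<in> sets M" using meas[of n] by measurable
      have s2: "{w\<in>space M. Y n w \<le> b} \<in> sets M" using meas[of n] by measurable
      have "P n \<le> measure M ({w\<in>space M. Y n w \<le> a} \<union> (space M - {w\<in>space M. Y n w \<le> b}))"
        unfolding P_def using sub s1 s2 by (intro finite_measure_mono) auto
      also have "\<dots> \<le> G n a + measure M (space M - {w\<in>space M. Y n w \<le> b})"
        unfolding G_def using s1 s2 by (intro measure_Un_le) auto
      also have "measure M (space M - {w\<in>space M. Y n w \<le> b}) = 1 - G n b"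
        unfolding G_def using s2 by (rule prob_compl)
      finally show "P n < e" using elim(1,2) Fa Fb by (simp add: \<epsilon>_def)
    qed
  qed
  have "P \<longlonglongrightarrow> 0"
  proof (rule order_tendstoI)
    fix e :: real assume "e < 0"
    then have "\<And>n. e < P n" using P_nn by (meson less_le_trans)
    then show "\<forall>\<^sub>F n in sequentially. e < P n" by simp
  next
    fix e :: real assume "0 < e"
    then show "\<forall>\<^sub>F n in sequentially. P n < e" by (rule ev)
  qed
  then show ?thesis unfolding P_def .
qed


lemma gauss_moments:
  assumes M: "prob_space M" and D: "distributed M lborel X (normal_density 0 s)" and s: "0 < s"
  shows gauss_int: "integrable M (\<lambda>w. X w ^ n)"
    and gauss_m1: "(\<integral>w. X w \<partial>M) = 0"
    and gauss_m2: "(\<integral>w. X w ^ 2 \<partial>M) = s\<^sup>2"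
    and gauss_m3: "(\<integral>w. X w ^ 3 \<partial>M) = 0"
    and gauss_m4: "(\<integral>w. X w ^ 4 \<partial>M) = 3 * s ^ 4"
proof -
  have nn: "\<And>x. x \<in> space lborel \<Longrightarrow> 0 \<le> normal_density 0 s x" by simp
  have mom: "(\<integral>w. X w ^ n \<partial>M) = (\<integral>x. normal_density 0 s x * x ^ n \<partial>lborel)" for n
    using distributed_integral[OF D, of "\<lambda>x. x ^ n"] by simp
  have "integrable lborel (\<lambda>x. normal_density 0 s x * (x - 0) ^ n)"
    using integrable_normal_moment[OF s] .
  then show "integrable M (\<lambda>w. X w ^ n)"
    using distributed_integrable[OF D, of "\<lambda>x. x ^ n"] by simp
  show "(\<integral>w. X w \<partial>M) = 0"
    using mom[of 1] integral_normal_moment_odd[OF s, of 0 0] by simp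
  have f2: "fact 2 = (2::real)" by (simp add: fact_numeral)
  have "(\<integral>x. normal_density 0 s x * (x - 0) ^ (2 * 1) \<partial>lborel) = fact (2 * 1) / ((2 / s\<^sup>2)^1 * fact 1)"
    by (rule integral_normal_moment_even[OF s])
  then have "(\<integral>x. normal_density 0 s x * x ^ 2 \<partial>lborel) = s\<^sup>2" using s f2 by simp
  then show "(\<integral>w. X w ^ 2 \<partial>M) = s\<^sup>2" using mom[of 2] by simp
  show "(\<integral>w. X w ^ 3 \<partial>M) = 0"
    using mom[of 3] integral_normal_moment_odd[OF s, of 0 1] by (simp add: numeral_3_eq_3)
  have f4: "fact 4 = (24::real)" by (simp add: fact_numeral)
  have "(\<integral>x. normal_density 0 s x * (x - 0) ^ (2 * 2) \<partial>lborel) = fact (2 * 2) / ((2 / s\<^sup>2)^2 * fact 2)"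
    by (rule integral_normal_moment_even[OF s])
  then have "(\<integral>x. normal_density 0 s x * x ^ 4 \<partial>lborel) = 3 * s ^ 4" using s f2 f4
    by (simp add: field_simps power2_eq_square eval_nat_numeral)
  then show "(\<integral>w. X w ^ 4 \<partial>M) = 3 * s ^ 4" using mom[of 4] by simp
qed

lemma sq_poly_expand:
  fixes c a b s x :: real
  shows "(c * (a * x + b * (x\<^sup>2 - s\<^sup>2)))\<^sup>2 =
    c\<^sup>2 * b\<^sup>2 * s ^ 4 + (- 2 * c\<^sup>2 * a * b * s\<^sup>2) * x + (c\<^sup>2 * a\<^sup>2 - 2 * c\<^sup>2 * b\<^sup>2 * s\<^sup>2) * x ^ 2
     + (2 * c\<^sup>2 * a * b) * x ^ 3 + (c\<^sup>2 * b\<^sup>2) * x ^ 4"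
  by (simp add: eval_nat_numeral algebra_simps)

lemma quad_moments:
  assumes M: "prob_space M" and D: "distributed M lborel X (normal_density 0 s)" and s: "0 < s"
  shows "integrable M (\<lambda>w. c * (a * X w + b * ((X w)\<^sup>2 - s\<^sup>2)))"
    and "integrable M (\<lambda>w. (c * (a * X w + b * ((X w)\<^sup>2 - s\<^sup>2)))\<^sup>2)"
    and "(\<integral>w. c * (a * X w + b * ((X w)\<^sup>2 - s\<^sup>2)) \<partial>M) = 0"
    and "(\<integral>w. (c * (a * X w + b * ((X w)\<^sup>2 - s\<^sup>2)))\<^sup>2 \<partial>M) = c\<^sup>2 * (a\<^sup>2 * s\<^sup>2 + 2 * b\<^sup>2 * s ^ 4)"
proof -
  interpret prob_space M by (rule M)
  note I = gauss_int[OF M D s]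
  note m1 = gauss_m1[OF M D s] and m2 = gauss_m2[OF M D s] and m3 = gauss_m3[OF M D s]
    and m4 = gauss_m4[OF M D s]
  have I1: "integrable M X" using I[of 1] by simp
  have e1: "(\<lambda>w. c * (a * X w + b * ((X w)\<^sup>2 - s\<^sup>2))) = (\<lambda>w. (c * a) * X w + (c * b) * X w ^ 2 - c * b * s\<^sup>2)"
    by (auto simp: fun_eq_iff algebra_simps)
  show i1: "integrable M (\<lambda>w. c * (a * X w + b * ((X w)\<^sup>2 - s\<^sup>2)))"
    unfolding e1 using I1 I[of 2] by simp
  show "(\<integral>w. c * (a * X w + b * ((X w)\<^sup>2 - s\<^sup>2)) \<partial>M) = 0"
    unfolding e1 using I1 I[of 2] m1 m2 by (simp add: prob_space)
  have e2: "(\<lambda>w. (c * (a * X w + b * ((X w)\<^sup>2 - s\<^sup>2)))\<^sup>2) = (\<lambda>w.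
    c\<^sup>2 * b\<^sup>2 * s ^ 4 + (- 2 * c\<^sup>2 * a * b * s\<^sup>2) * X w + (c\<^sup>2 * a\<^sup>2 - 2 * c\<^sup>2 * b\<^sup>2 * s\<^sup>2) * X w ^ 2
     + (2 * c\<^sup>2 * a * b) * X w ^ 3 + (c\<^sup>2 * b\<^sup>2) * X w ^ 4)"
    by (simp add: sq_poly_expand)
  show "integrable M (\<lambda>w. (c * (a * X w + b * ((X w)\<^sup>2 - s\<^sup>2)))\<^sup>2)"
    unfolding e2 using I1 I[of 2] I[of 3] I[of 4] by simp
  have "(\<integral>w. (c * (a * X w + b * ((X w)\<^sup>2 - s\<^sup>2)))\<^sup>2 \<partial>M) =
    c\<^sup>2 * b\<^sup>2 * s ^ 4 + (- 2 * c\<^sup>2 * a * b * s\<^sup>2) * 0 + (c\<^sup>2 * a\<^sup>2 - 2 * c\<^sup>2 * b\<^sup>2 * s\<^sup>2) * s\<^sup>2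
     + (2 * c\<^sup>2 * a * b) * 0 + (c\<^sup>2 * b\<^sup>2) * (3 * s ^ 4)"
    unfolding e2 using I1 I[of 2] I[of 3] I[of 4] m1 m2 m3 m4 by (simp add: prob_space)
  also have "\<dots> = c\<^sup>2 * (a\<^sup>2 * s\<^sup>2 + 2 * b\<^sup>2 * s ^ 4)" by (simp add: eval_nat_numeral algebra_simps)
  finally show "(\<integral>w. (c * (a * X w + b * ((X w)\<^sup>2 - s\<^sup>2)))\<^sup>2 \<partial>M) = c\<^sup>2 * (a\<^sup>2 * s\<^sup>2 + 2 * b\<^sup>2 * s ^ 4)" .
qed

lemma indep_sum_sq:
  fixes Z :: "'i \<Rightarrow> 'a \<Rightarrow> real"
  assumes M: "prob_space M" and fin: "finite I" and ind: "prob_space.indep_vars M (\<lambda>_. borel) Z I"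
    and int: "\<And>i. i \<in> I \<Longrightarrow> integrable M (Z i)"
    and int2: "\<And>i. i \<in> I \<Longrightarrow> integrable M (\<lambda>w. (Z i w)\<^sup>2)"
    and e0: "\<And>i. i \<in> I \<Longrightarrow> (\<integral>w. Z i w \<partial>M) = 0"
  shows "integrable M (\<lambda>w. (\<Sum>i\<in>I. Z i w)\<^sup>2)"
    and "(\<integral>w. (\<Sum>i\<in>I. Z i w)\<^sup>2 \<partial>M) = (\<Sum>i\<in>I. \<integral>w. (Z i w)\<^sup>2 \<partial>M)"
proof -
  interpret prob_space M by (rule M)
  have pair: "integrable M (\<lambda>w. Z i w * Z j w) \<and>
      (\<integral>w. Z i w * Z j w \<partial>M) = (if i = j then (\<integral>w. (Z i w)\<^sup>2 \<partial>M) else 0)"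
    if ij: "i \<in> I" "j \<in> I" for i j
  proof (cases "i = j")
    case True
    then show ?thesis using int2[OF ij(1)] by (simp add: power2_eq_square)
  next
    case False
    have ind2: "indep_vars (\<lambda>_. borel) Z {i, j}"
      by (rule indep_vars_subset[OF ind]) (use ij in auto)
    have int2': "\<And>k. k \<in> {i,j} \<Longrightarrow> integrable M (Z k)" using int ij by auto
    have prodeq: "(\<lambda>w. \<Prod>k\<in>{i,j}. Z k w) = (\<lambda>w. Z i w * Z j w)" using False by auto
    have "integrable M (\<lambda>w. \<Prod>k\<in>{i,j}. Z k w)"
      by (rule indep_vars_integrable[OF _ ind2 int2']) simp
    moreover have "(\<integral>w. (\<Prod>k\<in>{i,j}. Z k w) \<partial>M) = (\<Prod>k\<in>{i,j}. \<integral>w. Z k w \<partial>M)"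
      by (rule indep_vars_lebesgue_integral[OF _ ind2 int2']) simp
    ultimately show ?thesis using False e0 ij unfolding prodeq by simp
  qed
  have sq: "(\<lambda>w. (\<Sum>i\<in>I. Z i w)\<^sup>2) = (\<lambda>w. \<Sum>i\<in>I. \<Sum>j\<in>I. Z i w * Z j w)"
    by (simp add: power2_eq_square sum_product)
  show "integrable M (\<lambda>w. (\<Sum>i\<in>I. Z i w)\<^sup>2)"
    unfolding sq using pair by (intro Bochner_Integration.integrable_sum) auto
  have "(\<integral>w. (\<Sum>i\<in>I. Z i w)\<^sup>2 \<partial>M) = (\<Sum>i\<in>I. \<Sum>j\<in>I. \<integral>w. Z i w * Z j w \<partial>M)"
    unfolding sq using pair
    by (simp add: Bochner_Integration.integral_sum Bochner_Integration.integrable_sum)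
  also have "\<dots> = (\<Sum>i\<in>I. \<Sum>j\<in>I. if i = j then (\<integral>w. (Z i w)\<^sup>2 \<partial>M) else 0)"
    using pair by (intro sum.cong refl) auto
  also have "\<dots> = (\<Sum>i\<in>I. \<integral>w. (Z i w)\<^sup>2 \<partial>M)"
    using fin by (simp add: sum.delta)
  finally show "(\<integral>w. (\<Sum>i\<in>I. Z i w)\<^sup>2 \<partial>M) = (\<Sum>i\<in>I. \<integral>w. (Z i w)\<^sup>2 \<partial>M)" .
qed


lemma sym_sum_reindex:
  fixes h :: "nat \<Rightarrow> nat \<Rightarrow> real"
  shows "(\<Sum>i<N. \<Sum>j<N. h (min i j) (max i j)) =
    (\<Sum>p\<in>{(i, j). i \<le> j \<and> j < N}. (if fst p = snd p then 1 else 2) * h (fst p) (snd p))"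
proof (induction N)
  case 0
  then show ?case by simp
next
  case (Suc N)
  let ?c = "\<lambda>p::nat\<times>nat. (if fst p = snd p then 1 else 2::real)"
  have "(\<Sum>i<Suc N. \<Sum>j<Suc N. h (min i j) (max i j))
      = (\<Sum>i<N. \<Sum>j<N. h (min i j) (max i j)) + (\<Sum>i<N. h i N) + (\<Sum>j<N. h j N) + h N N"
    by (simp add: sum.distrib min_def max_def)
  also have "\<dots> = (\<Sum>p\<in>{(i, j). i \<le> j \<and> j < N}. ?c p * h (fst p) (snd p)) + (2 * (\<Sum>i<N. h i N) + h N N)"
    using Suc.IH by simp
  also have "2 * (\<Sum>i<N. h i N) + h N N = (\<Sum>a\<in>{..N}. ?c (a, N) * h a N)"
    by (simp add: lessThan_Suc_atMost[symmetric] sum_distrib_left)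
  also have "\<dots> = (\<Sum>p\<in>(\<lambda>a. (a, N)) ` {..N}. ?c p * h (fst p) (snd p))"
    by (subst sum.reindex) (auto simp: inj_on_def)
  also have "(\<Sum>p\<in>{(i, j). i \<le> j \<and> j < N}. ?c p * h (fst p) (snd p)) + \<dots>
      = (\<Sum>p\<in>{(i, j). i \<le> j \<and> j < N} \<union> (\<lambda>a. (a, N)) ` {..N}. ?c p * h (fst p) (snd p))"
  proof (rule sum.union_disjoint[symmetric])
    have "{(i, j). i \<le> j \<and> j < N} \<subseteq> {..N} \<times> {..N}" by auto
    then show "finite {(i, j). i \<le> j \<and> j < (N::nat)}" by (rule finite_subset) simp
  qed auto
  also have "{(i, j). i \<le> j \<and> j < N} \<union> (\<lambda>a. (a, N)) ` {..N} = {(i, j). i \<le> j \<and> j < Suc N}"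
    by auto
  finally show ?case .
qed

lemma frob_A:
  fixes l :: "nat \<Rightarrow> real" and u :: "nat \<Rightarrow> nat \<Rightarrow> real"
  assumes fin: "finite R"
    and orth: "\<And>r s. r \<in> R \<Longrightarrow> s \<in> R \<Longrightarrow> (\<Sum>i<N. u r i * u s i) = (if r = s then 1 else 0)"
  shows "(\<Sum>i<N. \<Sum>j<N. (\<Sum>r\<in>R. l r * u r i * u r j)\<^sup>2) = (\<Sum>r\<in>R. (l r)\<^sup>2)"
proof -
  have "(\<Sum>i<N. \<Sum>j<N. (\<Sum>r\<in>R. l r * u r i * u r j)\<^sup>2)
      = (\<Sum>i<N. \<Sum>j<N. \<Sum>r\<in>R. \<Sum>s\<in>R. (l r * l s) * ((u r i * u s i) * (u r j * u s j)))"
    by (simp add: power2_eq_square sum_product mult_ac)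
  also have "\<dots> = (\<Sum>i<N. \<Sum>r\<in>R. \<Sum>j<N. \<Sum>s\<in>R. (l r * l s) * ((u r i * u s i) * (u r j * u s j)))"
    by (rule sum.cong[OF refl], rule sum.swap)
  also have "\<dots> = (\<Sum>r\<in>R. \<Sum>i<N. \<Sum>j<N. \<Sum>s\<in>R. (l r * l s) * ((u r i * u s i) * (u r j * u s j)))"
    by (rule sum.swap)
  also have "\<dots> = (\<Sum>r\<in>R. \<Sum>i<N. \<Sum>s\<in>R. \<Sum>j<N. (l r * l s) * ((u r i * u s i) * (u r j * u s j)))"
    by (rule sum.cong[OF refl], rule sum.cong[OF refl], rule sum.swap)
  also have "\<dots> = (\<Sum>r\<in>R. \<Sum>s\<in>R. \<Sum>i<N. \<Sum>j<N. (l r * l s) * ((u r i * u s i) * (u r j * u s j)))"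
    by (rule sum.cong[OF refl], rule sum.swap)
  also have "\<dots> = (\<Sum>r\<in>R. \<Sum>s\<in>R. (l r * l s) * ((\<Sum>i<N. u r i * u s i) * (\<Sum>j<N. u r j * u s j)))"
    unfolding sum_product by (simp only: sum_distrib_left)
  also have "\<dots> = (\<Sum>r\<in>R. \<Sum>s\<in>R. if s = r then (l r)\<^sup>2 else 0)"
    using orth by (intro sum.cong refl) (auto simp: power2_eq_square)
  also have "\<dots> = (\<Sum>r\<in>R. (l r)\<^sup>2)" using fin by simp
  finally show ?thesis .
qed

lemma sum_cv:
  assumes N: "1 \<le> N"
  shows "(\<Sum>p\<in>{(i, j). i \<le> j \<and> j < N}. (if fst p = snd p then 1 else 2) *
           (if fst p = snd p then 2 / real N else 1 / real N)) = real N + 1"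
proof -
  have "(\<Sum>p\<in>{(i, j). i \<le> j \<and> j < N}. (if fst p = snd p then 1 else 2) *
           (if fst p = snd p then 2 / real N else 1 / real N))
      = (\<Sum>i<N. \<Sum>j<N. (\<lambda>a b. if a = b then 2 / real N else 1 / real N) (min i j) (max i j))"
    by (rule sym_sum_reindex[symmetric, where h = "\<lambda>a b. if a = b then 2 / real N else 1 / real N", simplified])
  also have "\<dots> = (\<Sum>i<N. \<Sum>j<N. 1 / real N + (if j = i then 1 / real N else 0))"
    by (intro sum.cong refl) (auto simp: min_def max_def)
  also have "\<dots> = (\<Sum>i<N. 1 + 1 / real N)"
    using N by (intro sum.cong refl) (simp add: sum.distrib)
  also have "\<dots> = real N + 1" using N by (simp add: field_simps)
  finally show ?thesis .
qed


lemma frob_conc: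
  fixes M :: "'a measure" and g :: "nat \<Rightarrow> nat \<Rightarrow> nat \<Rightarrow> 'a \<Rightarrow> real"
    and u :: "nat \<Rightarrow> nat \<Rightarrow> nat \<Rightarrow> real" and lam :: "nat \<Rightarrow> real" and sg rr :: real
  assumes M: "prob_space M"
    and ind: "prob_space.indep_vars M (\<lambda>_. borel) (\<lambda>(i, j). g N i j) {(i, j). i \<le> j \<and> j < N}"
    and goff: "\<And>i j. i < j \<Longrightarrow> j < N \<Longrightarrow>
                  distributed M lborel (g N i j) (normal_density 0 (sqrt (1 / real N)))"
    and gdiag: "\<And>i. i < N \<Longrightarrow>
                  distributed M lborel (g N i i) (normal_density 0 (sqrt (2 / real N)))"
    and orth: "\<And>r s. r \<in> {1..k} \<Longrightarrow> s \<in> {1..k} \<Longrightarrow>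
                   (\<Sum>i<N. u N r i * u N s i) = (if r = s then 1 else 0)"
    and N: "1 \<le> N" and rr: "0 < rr"
  shows "measure M {w\<in>space M. rr \<le> \<bar>(\<Sum>i<N. \<Sum>j<N. (spiked_X k lam u sg g N w $$ (i,j))\<^sup>2)
            - ((\<Sum>t\<in>{1..k}. (lam t)\<^sup>2) + sg\<^sup>2 * (real N + 1))\<bar>}
         \<le> (8 * sg\<^sup>2 * (\<Sum>t\<in>{1..k}. (lam t)\<^sup>2) + 8 * sg ^ 4) / rr\<^sup>2"
proof -
  interpret prob_space M by (rule M)
  define I where "I = {(i, j). i \<le> j \<and> j < (N::nat)}"
  define A where "A a b = (\<Sum>t\<in>{1..k}. lam t * u N t a * u N t b)" for a b
  define c where "c p = (if fst p = snd p then 1 else 2::real)" for p :: "nat \<times> nat"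
  define v where "v p = (if fst p = snd p then 2 / real N else 1 / real N)" for p :: "nat \<times> nat"
  define G where "G = (\<lambda>(i, j). g N i j)"
  define L where "L = (\<Sum>t\<in>{1..k}. (lam t)\<^sup>2)"
  define Y where "Y p x = c p * ((2 * sg * A (fst p) (snd p)) * x + sg\<^sup>2 * (x\<^sup>2 - (sqrt (v p))\<^sup>2))" for p x
  define Z where "Z p w = Y p (G p w)" for p w
  have finI: "finite I"
  proof -
    have "I \<subseteq> {..N} \<times> {..N}" unfolding I_def by auto
    then show ?thesis by (rule finite_subset) simp
  qed
  have vpos: "0 < v p" for p unfolding v_def using N by auto
  have sv: "(sqrt (v p))\<^sup>2 = v p" for p using vpos[of p] by simp
  have Gp: "G p = g N (fst p) (snd p)" for p unfolding G_def by (simp add: split_beta)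
  have dist: "distributed M lborel (G p) (normal_density 0 (sqrt (v p)))" if "p \<in> I" for p
  proof (cases "fst p = snd p")
    case True
    then show ?thesis using that gdiag[of "fst p"] unfolding Gp v_def I_def
      by (cases p) auto
  next
    case False
    then show ?thesis using that goff[of "fst p" "snd p"] unfolding Gp v_def I_def
      by (cases p) auto
  qed
  have spos: "0 < sqrt (v p)" for p using vpos[of p] by simp
  have Zint: "integrable M (Z p)" if "p \<in> I" for p
    using quad_moments(1)[OF M dist[OF that] spos[of p], where c="c p" and a="2 * sg * A (fst p) (snd p)" and b="sg\<^sup>2"] unfolding Z_def Y_def by simp
  have Zint2: "integrable M (\<lambda>w. (Z p w)\<^sup>2)" if "p \<in> I" for p
    using quad_moments(2)[OF M dist[OF that] spos[of p], where c="c p" and a="2 * sg * A (fst p) (snd p)" and b="sg\<^sup>2"] unfolding Z_def Y_def by simp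
  have Ze0: "(\<integral>w. Z p w \<partial>M) = 0" if "p \<in> I" for p
    using quad_moments(3)[OF M dist[OF that] spos[of p], where c="c p" and a="2 * sg * A (fst p) (snd p)" and b="sg\<^sup>2"] unfolding Z_def Y_def by simp
  have Ze2: "(\<integral>w. (Z p w)\<^sup>2 \<partial>M) = (c p)\<^sup>2 * ((2 * sg * A (fst p) (snd p))\<^sup>2 * v p + 2 * (sg\<^sup>2)\<^sup>2 * (v p)\<^sup>2)"
    if "p \<in> I" for p
  proof -
    have "(sqrt (v p)) ^ 4 = ((sqrt (v p))\<^sup>2)\<^sup>2" by (simp flip: power_mult)
    then have s4: "(sqrt (v p)) ^ 4 = (v p)\<^sup>2" using sv[of p] by simp
    show ?thesis
      using quad_moments(4)[OF M dist[OF that] spos[of p], where c="c p" and a="2 * sg * A (fst p) (snd p)" and b="sg\<^sup>2"]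
      unfolding Z_def Y_def s4 sv by simp
  qed
  have Zind: "indep_vars (\<lambda>_. borel) Z I"
    unfolding Z_def[abs_def] G_def
    by (rule indep_vars_compose2[OF ind[folded I_def]]) (simp add: Y_def)
  note S = indep_sum_sq[OF M finI Zind Zint Zint2 Ze0]
  have Asym: "A a b = A b a" for a b unfolding A_def by (simp add: mult_ac)
  have Amm: "A i j = A (min i j) (max i j)" for i j using Asym by (simp add: min_def max_def)
  have cv: "(\<Sum>p\<in>I. c p * v p) = real N + 1"
    unfolding I_def c_def v_def using sum_cv[OF N] .
  have cA: "(\<Sum>p\<in>I. c p * (A (fst p) (snd p))\<^sup>2) = L"
  proof -
    have "(\<Sum>p\<in>I. c p * (A (fst p) (snd p))\<^sup>2) = (\<Sum>i<N. \<Sum>j<N. (\<lambda>a b. (A a b)\<^sup>2) (min i j) (max i j))"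
      using sym_sum_reindex[where h="\<lambda>a b. (A a b)\<^sup>2" and N=N] unfolding I_def c_def by simp
    also have "\<dots> = (\<Sum>i<N. \<Sum>j<N. (A i j)\<^sup>2)" by (simp add: Amm[symmetric])
    also have "\<dots> = L" unfolding A_def L_def by (rule frob_A) (simp_all add: orth)
    finally show ?thesis .
  qed
  have ident: "(\<Sum>i<N. \<Sum>j<N. (spiked_X k lam u sg g N w $$ (i,j))\<^sup>2) - (L + sg\<^sup>2 * (real N + 1))
      = (\<Sum>p\<in>I. Z p w)" for w
  proof -
    have "(\<Sum>i<N. \<Sum>j<N. (spiked_X k lam u sg g N w $$ (i,j))\<^sup>2)
        = (\<Sum>i<N. \<Sum>j<N. (\<lambda>a b. (A a b + sg * g N a b w)\<^sup>2) (min i j) (max i j))"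
      unfolding spiked_X_def by (intro sum.cong refl) (auto simp: Amm[symmetric], simp add: A_def)
    also have "\<dots> = (\<Sum>p\<in>I. c p * (A (fst p) (snd p) + sg * G p w)\<^sup>2)"
      using sym_sum_reindex[where h="\<lambda>a b. (A a b + sg * g N a b w)\<^sup>2" and N=N]
      unfolding I_def c_def Gp by simp
    also have "\<dots> = (\<Sum>p\<in>I. c p * (A (fst p) (snd p))\<^sup>2) + sg\<^sup>2 * (\<Sum>p\<in>I. c p * v p) + (\<Sum>p\<in>I. Z p w)"
    proof -
      have pt: "c p * (A (fst p) (snd p) + sg * G p w)\<^sup>2 = c p * (A (fst p) (snd p))\<^sup>2 + sg\<^sup>2 * (c p * v p) + Z p w" for p
        unfolding Z_def Y_def sv by (simp add: power2_eq_square algebra_simps)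
      show ?thesis by (simp add: pt sum.distrib sum_distrib_left)
    qed
    finally show ?thesis using cv cA by simp
  qed
  have bnd: "(c p)\<^sup>2 * ((2 * sg * A (fst p) (snd p))\<^sup>2 * v p + 2 * (sg\<^sup>2)\<^sup>2 * (v p)\<^sup>2)
      \<le> 8 * sg\<^sup>2 * (c p * (A (fst p) (snd p))\<^sup>2) + (4 * sg ^ 4 / real N) * (c p * v p)" for p
  proof -
    have N1: "1 \<le> real N" using N by simp
    define X where "X = sg\<^sup>2 * (A (fst p) (snd p))\<^sup>2"
    have X0: "0 \<le> X" unfolding X_def by simp
    have h: "X / real N \<le> X" using X0 N1 by (simp add: divide_le_eq mult_le_cancel_left1 mult_left_le)
    have Np: "0 < real N" using N1 by simp
    show ?thesis
    proof (cases "fst p = snd p")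
      case True
      have l: "(c p)\<^sup>2 * ((2 * sg * A (fst p) (snd p))\<^sup>2 * v p + 2 * (sg\<^sup>2)\<^sup>2 * (v p)\<^sup>2)
          = 8 * (X / real N) + 8 * sg ^ 4 / (real N)\<^sup>2"
        using Np by (simp add: c_def v_def True X_def power2_eq_square field_simps eval_nat_numeral)
      have r: "8 * sg\<^sup>2 * (c p * (A (fst p) (snd p))\<^sup>2) + (4 * sg ^ 4 / real N) * (c p * v p)
          = 8 * X + 8 * sg ^ 4 / (real N)\<^sup>2"
        using Np by (simp add: c_def v_def True X_def power2_eq_square field_simps eval_nat_numeral)
      show ?thesis unfolding l r using h by simp
    next
      case False
      have l: "(c p)\<^sup>2 * ((2 * sg * A (fst p) (snd p))\<^sup>2 * v p + 2 * (sg\<^sup>2)\<^sup>2 * (v p)\<^sup>2)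
          = 16 * (X / real N) + 8 * sg ^ 4 / (real N)\<^sup>2"
        using Np by (simp add: c_def v_def False X_def power2_eq_square field_simps eval_nat_numeral)
      have r: "8 * sg\<^sup>2 * (c p * (A (fst p) (snd p))\<^sup>2) + (4 * sg ^ 4 / real N) * (c p * v p)
          = 16 * X + 8 * sg ^ 4 / (real N)\<^sup>2"
        using Np by (simp add: c_def v_def False X_def power2_eq_square field_simps eval_nat_numeral)
      show ?thesis unfolding l r using h by simp
    qed
  qed
  have ES: "(\<integral>w. (\<Sum>p\<in>I. Z p w)\<^sup>2 \<partial>M) \<le> 8 * sg\<^sup>2 * L + 8 * sg ^ 4"
  proof -
    have "(\<integral>w. (\<Sum>p\<in>I. Z p w)\<^sup>2 \<partial>M) = (\<Sum>p\<in>I. \<integral>w. (Z p w)\<^sup>2 \<partial>M)" by (rule S(2))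
    also have "\<dots> \<le> (\<Sum>p\<in>I. 8 * sg\<^sup>2 * (c p * (A (fst p) (snd p))\<^sup>2) + (4 * sg ^ 4 / real N) * (c p * v p))"
      using Ze2 bnd by (intro sum_mono) auto
    also have "\<dots> = 8 * sg\<^sup>2 * L + (4 * sg ^ 4 / real N) * (real N + 1)"
      by (simp add: sum.distrib sum_distrib_left[symmetric] cA cv[symmetric] del: times_divide_eq_left)
    also have "(4 * sg ^ 4 / real N) * (real N + 1) \<le> 8 * sg ^ 4"
    proof -
      have Np: "0 < real N" "1 \<le> real N" using N by auto
      have "(4 * sg ^ 4 / real N) * (real N + 1) = 4 * sg ^ 4 + 4 * sg ^ 4 / real N"
        using Np by (simp add: field_simps)
      also have "4 * sg ^ 4 / real N \<le> 4 * sg ^ 4"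
        using Np by (simp add: divide_le_eq mult_le_cancel_left1)
      finally show ?thesis by simp
    qed
    finally show ?thesis by simp
  qed
  have Zmeas: "Z p \<in> borel_measurable M" if "p \<in> I" for p
    using Zind that unfolding indep_vars_def by auto
  have Smeas: "(\<lambda>w. \<Sum>p\<in>I. Z p w) \<in> borel_measurable M"
    using Zmeas by (intro borel_measurable_sum) auto
  have iff: "rr \<le> \<bar>x\<bar> \<longleftrightarrow> rr\<^sup>2 \<le> x\<^sup>2" for x :: real
    using rr by (metis abs_le_square_iff abs_of_pos)
  have "measure M {w\<in>space M. rr \<le> \<bar>\<Sum>p\<in>I. Z p w\<bar>} = measure M {w\<in>space M. (\<Sum>p\<in>I. Z p w)\<^sup>2 \<ge> rr\<^sup>2}"
    by (simp add: iff)
  also have "\<dots> \<le> (\<integral>w. (\<Sum>p\<in>I. Z p w)\<^sup>2 \<partial>M) / rr\<^sup>2"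
    using S(1) Smeas rr by (intro integral_Markov_inequality_measure[where A="space M"]) auto
  also have "\<dots> \<le> (8 * sg\<^sup>2 * L + 8 * sg ^ 4) / rr\<^sup>2"
    using ES rr by (simp add: divide_right_mono)
  finally have "measure M {w\<in>space M. rr \<le> \<bar>\<Sum>p\<in>I. Z p w\<bar>} \<le> (8 * sg\<^sup>2 * L + 8 * sg ^ 4) / rr\<^sup>2" .
  then show ?thesis unfolding L_def[symmetric] ident .
qed


lemma tail_decomp:
  assumes "j \<le> N"
  shows "tail_sq N X 0 = (\<Sum>i\<in>{1..j}. (eig X i)\<^sup>2) + tail_sq N X j"
  using assms
proof (induction j)
  case 0
  then show ?case by simp
next
  case (Suc j)
  have "tail_sq N X j = (eig X (Suc j))\<^sup>2 + tail_sq N X (Suc j)"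
    using tail_split[of "Suc j" N X] Suc.prems by simp
  then show ?case using Suc by simp
qed

lemma good_argmin:
  fixes X :: "real mat" and psi :: "nat \<Rightarrow> real"
  assumes Xc: "X \<in> carrier_mat N N"
    and symX: "\<And>i j. i < N \<Longrightarrow> j < N \<Longrightarrow> X $$ (i,j) = X $$ (j,i)"
    and sg: "0 < sg" and kq: "k \<le> q" and qN: "q + 1 \<le> N"
    and d: "0 < d" "d \<le> eta" and eta1: "eta \<le> 1"
    and mm: "2 * sg * (1 + eta) < m - eta" and psim: "\<And>i. i \<in> {1..k} \<Longrightarrow> m \<le> psi i"
    and spike: "\<And>i. i \<in> {1..k} \<Longrightarrow> \<bar>eig X i - psi i\<bar> < eta"
    and bulk: "\<And>j. j \<in> {k+1..q} \<Longrightarrow> \<bar>eig X j - 2 * sg\<bar> < sg * d / 16"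
    and Flow: "(real N + 1) * sg\<^sup>2 * (1 - d / 16) \<le> (\<Sum>i<N. \<Sum>j<N. (X $$ (i,j))\<^sup>2)"
    and Fup: "(\<Sum>i<N. \<Sum>j<N. (X $$ (i,j))\<^sup>2) \<le> (real N + 1) * sg\<^sup>2 * (1 + eta)"
    and Rb: "(\<Sum>i\<in>{1..k}. (\<bar>psi i\<bar> + eta)\<^sup>2) + real q * (9 * sg\<^sup>2) \<le> (real N + 1) * sg\<^sup>2 * d / 16"
    and dq: "16 * real q \<le> real N * d"
  shows "argmin_upto (gaic_known C sg (2 + d) N X) q = k \<and> argmin_upto (gaic_unknown C' (2 + d) N X) q = k"
proof -
  define F where "F = (\<Sum>i<N. \<Sum>j<N. (X $$ (i,j))\<^sup>2)"
  have T0: "tail_sq N X 0 = F" unfolding F_def by (rule sym_eigs(2)[OF Xc symX])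
  have d1: "d \<le> 1" using d eta1 by simp
  have eta0: "0 < eta" using d by simp
  have Np: "0 < real N" using qN by simp
  have qN': "q \<le> N" using qN by simp
  have sp: "2 * (2 + d) * sg\<^sup>2 * (1 + eta) < (eig X i)\<^sup>2" if "i \<in> {1..k}" for i
    by (rule ineq_spike[OF sg d spike[OF that] psim[OF that] mm])
  have sp1: "2 * (2 + d) * sg\<^sup>2 \<le> 2 * (2 + d) * sg\<^sup>2 * (1 + eta)"
    using d eta0 sg by simp
  have sumq: "(\<Sum>i\<in>{1..q}. (eig X i)\<^sup>2) \<le> (\<Sum>i\<in>{1..k}. (\<bar>psi i\<bar> + eta)\<^sup>2) + real q * (9 * sg\<^sup>2)"
  proof -
    have split: "{1..q} = {1..k} \<union> {k+1..q}" using kq by auto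
    have "(\<Sum>i\<in>{1..q}. (eig X i)\<^sup>2) = (\<Sum>i\<in>{1..k}. (eig X i)\<^sup>2) + (\<Sum>i\<in>{k+1..q}. (eig X i)\<^sup>2)"
      unfolding split by (rule sum.union_disjoint) auto
    also have "(\<Sum>i\<in>{1..k}. (eig X i)\<^sup>2) \<le> (\<Sum>i\<in>{1..k}. (\<bar>psi i\<bar> + eta)\<^sup>2)"
    proof (rule sum_mono)
      fix i assume i: "i \<in> {1..k}"
      have "\<bar>eig X i\<bar> \<le> \<bar>psi i\<bar> + eta" using spike[OF i] by linarith
      then have "\<bar>eig X i\<bar>\<^sup>2 \<le> (\<bar>psi i\<bar> + eta)\<^sup>2" by (rule power_mono) simp
      then show "(eig X i)\<^sup>2 \<le> (\<bar>psi i\<bar> + eta)\<^sup>2" by simp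
    qed
    also have "(\<Sum>i\<in>{k+1..q}. (eig X i)\<^sup>2) \<le> (\<Sum>i\<in>{k+1..q}. 9 * sg\<^sup>2)"
    proof (rule sum_mono)
      fix i assume i: "i \<in> {k+1..q}"
      have "sg * d / 16 \<le> sg" using sg d1 by (simp add: mult_left_le)
      then have "\<bar>eig X i\<bar> \<le> 3 * sg" using bulk[OF i] sg by linarith
      then have "\<bar>eig X i\<bar>\<^sup>2 \<le> (3 * sg)\<^sup>2" by (rule power_mono) simp
      then show "(eig X i)\<^sup>2 \<le> 9 * sg\<^sup>2" by (simp add: power_mult_distrib)
    qed
    also have "(\<Sum>i\<in>{k+1..q}. 9 * sg\<^sup>2) \<le> real q * (9 * sg\<^sup>2)"
    proof -
      have "card {k+1..q} \<le> q" by simp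
      then have "real (card {k+1..q}) \<le> real q" by linarith
      then show ?thesis by (simp add: mult_right_mono)
    qed
    finally show ?thesis by simp
  qed
  have Tq: "(real N + 1) * sg\<^sup>2 * (1 - d / 8) \<le> tail_sq N X q"
  proof -
    have "tail_sq N X q = F - (\<Sum>i\<in>{1..q}. (eig X i)\<^sup>2)"
      using tail_decomp[OF qN', of X] T0 by simp
    moreover have "(real N + 1) * sg\<^sup>2 * (1 - d / 8) = (real N + 1) * sg\<^sup>2 * (1 - d / 16) - (real N + 1) * sg\<^sup>2 * d / 16"
      by (simp add: algebra_simps)
    ultimately show ?thesis using Flow sumq Rb unfolding F_def[symmetric] by linarith
  qed
  have Tqpos: "0 < tail_sq N X q"
  proof -
    have "0 < (real N + 1) * sg\<^sup>2 * (1 - d / 8)" using d1 sg by simp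
    then show ?thesis using Tq by linarith
  qed
  have Dge: "real N * (1 - d / 16) \<le> real N - real j + 1" if "j \<le> q" for j
  proof -
    have "real j \<le> real q" using that by simp
    moreover have "real N * (1 - d / 16) = real N - real N * d / 16" by (simp add: algebra_simps)
    ultimately show ?thesis using dq by linarith
  qed
  have known: "argmin_upto (gaic_known C sg (2 + d) N X) q = k"
  proof (rule det_known[OF kq qN' sg])
    fix j assume j: "1 \<le> j" "j \<le> k"
    have ji: "j \<in> {1..k}" using j by simp
    have a0: "2 * (2 + d) * sg\<^sup>2 < (eig X j)\<^sup>2" using sp[OF ji] sp1 by linarith
    have "2 * sg\<^sup>2 * (2 + d) = 2 * (2 + d) * sg\<^sup>2" by (simp only: mult_ac)
    then have a: "2 * sg\<^sup>2 * (2 + d) < (eig X j)\<^sup>2" using a0 by linarith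
    have b: "real N - real j + 1 \<le> real N" using j by simp
    have c: "0 \<le> real N - real j + 1" using j kq qN by simp
    have "2 * sg\<^sup>2 * (2 + d) * (real N - real j + 1) \<le> 2 * sg\<^sup>2 * (2 + d) * real N"
      using b d sg by (intro mult_left_mono) auto
    also have "\<dots> < real N * (eig X j)\<^sup>2" using a Np by (simp add: mult.commute)
    finally show "2 * sg\<^sup>2 * (2 + d) * (real N - real j + 1) < real N * (eig X j)\<^sup>2" .
  next
    fix j assume j: "k < j" "j \<le> q"
    have ji: "j \<in> {k+1..q}" using j by simp
    show "real N * (eig X j)\<^sup>2 < 2 * sg\<^sup>2 * (2 + d) * (real N - real j + 1)"
      by (rule ineq_bulk_known[OF sg d(1) d1 bulk[OF ji] Np Dge[OF j(2)]])
  qed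
  have unknown: "argmin_upto (gaic_unknown C' (2 + d) N X) q = k"
  proof (rule det_unknown[OF kq qN' Tqpos])
    fix j assume j: "1 \<le> j" "j \<le> k"
    have ji: "j \<in> {1..k}" using j by simp
    have b: "real N - real j + 1 \<le> real N" using j by simp
    have c: "0 \<le> real N - real j + 1" using j kq qN by simp
    have T1: "tail_sq N X (j - 1) \<le> (real N + 1) * sg\<^sup>2 * (1 + eta)"
      using tail_mono[of 0 "j - 1" N X] T0 Fup unfolding F_def by simp
    have T2: "0 \<le> tail_sq N X (j - 1)" by (rule tail_nonneg)
    have "2 * (2 + d) * (real N - real j + 1) * tail_sq N X (j - 1)
        \<le> 2 * (2 + d) * real N * ((real N + 1) * sg\<^sup>2 * (1 + eta))"
      using b c T1 T2 d by (intro mult_mono) auto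
    also have "\<dots> = real N * (real N + 1) * (2 * (2 + d) * sg\<^sup>2 * (1 + eta))" by (simp add: mult_ac)
    also have "\<dots> < real N * (real N + 1) * (eig X j)\<^sup>2"
      using sp[OF ji] Np by simp
    finally show "2 * (2 + d) * (real N - real j + 1) * tail_sq N X (j - 1) < real N * (real N + 1) * (eig X j)\<^sup>2" .
  next
    fix j assume j: "k < j" "j \<le> q"
    have ji: "j \<in> {k+1..q}" using j by simp
    have Tj: "(real N + 1) * sg\<^sup>2 * (1 - d / 8) \<le> tail_sq N X j"
      using tail_mono[of j q N X] j Tq by simp
    show "real N * (real N + 1) * (eig X j)\<^sup>2 < 2 * (2 + d) * (real N - real j + 1) * tail_sq N X j"
      by (rule ineq_bulk_unknown[OF sg d(1) d1 bulk[OF ji] Np Dge[OF j(2)] Tj])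
  qed
  show ?thesis using known unknown by simp
qed


theorem theorem2p2:
  fixes M :: "'a measure"
    and g :: "nat \<Rightarrow> nat \<Rightarrow> nat \<Rightarrow> 'a \<Rightarrow> real"
    and u :: "nat \<Rightarrow> nat \<Rightarrow> nat \<Rightarrow> real"
    and lam :: "nat \<Rightarrow> real"
    and sg :: real
    and k q :: nat
    and C :: "nat \<Rightarrow> real"
    and delta :: "nat \<Rightarrow> real"
    and TW :: "nat \<Rightarrow> real measure"
  assumes M: "prob_space M"
    \<comment> \<open>GOE entries: independent, N(0,1/N) off-diagonal, N(0,2/N) on the diagonal\<close>
    and g_indep: "\<And>N. prob_space.indep_vars M (\<lambda>_. borel) (\<lambda>(i, j). g N i j)
                          {(i, j). i \<le> j \<and> j < N}"
    and g_off: "\<And>N i j. i < j \<Longrightarrow> j < N \<Longrightarrow>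
                  distributed M lborel (g N i j) (normal_density 0 (sqrt (1 / real N)))"
    and g_diag: "\<And>N i. i < N \<Longrightarrow>
                  distributed M lborel (g N i i) (normal_density 0 (sqrt (2 / real N)))"
    \<comment> \<open>spike: A = sum_{r=1..k} lam_r u_r u_r^T, orthonormal u_r, lam_1 >= ... >= lam_k > sg > 0\<close>
    and sigma_pos: "sg > 0"
    and u_orth: "\<And>N r s. k \<le> N \<Longrightarrow> r \<in> {1..k} \<Longrightarrow> s \<in> {1..k} \<Longrightarrow>
                   (\<Sum>i<N. u N r i * u N s i) = (if r = s then 1 else 0)"
    and lam_mono: "\<And>r s. 1 \<le> r \<Longrightarrow> r \<le> s \<Longrightarrow> s \<le> k \<Longrightarrow> lam s \<le> lam r"
    and lam_gt: "\<And>r. r \<in> {1..k} \<Longrightarrow> lam r > sg"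
    and kq: "k \<le> q"
    \<comment> \<open>the eigenvalues are random variables\<close>
    and eig_meas: "\<And>N i. (\<lambda>w. eig (spiked_X k lam u sg g N w) i) \<in> borel_measurable M"
    \<comment> \<open>assumed almost-sure limits of the top eigenvalues\<close>
    and lim_spike: "\<And>i. i \<in> {1..k} \<Longrightarrow> AE w in M.
          (\<lambda>N. eig (spiked_X k lam u sg g N w) i) \<longlonglongrightarrow> lam i + sg\<^sup>2 / lam i"
    and lim_bulk: "\<And>i. i \<in> {k+1..q} \<Longrightarrow> AE w in M.
          (\<lambda>N. eig (spiked_X k lam u sg g N w) i) \<longlonglongrightarrow> 2 * sg"
    \<comment> \<open>assumed Tracy--Widom fluctuations (TW m = GOE Tracy--Widom law of order m)\<close>
    and TW_distr: "\<And>m. m \<ge> 1 \<Longrightarrow> real_distribution (TW m)"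
    and lim_TW: "\<And>i. i > k \<Longrightarrow> weak_conv_m
          (\<lambda>N. distr M borel
                 (\<lambda>w. real N powr (2/3) * (eig (spiked_X k lam u sg g N w) i - 2 * sg)))
          (TW (i - k))"
    \<comment> \<open>delta_N \<rightarrow> 0 and delta_N \<gg> N^(-2/3)\<close>
    and delta_lim: "delta \<longlonglongrightarrow> 0"
    and delta_big: "filterlim (\<lambda>N. real N powr (2/3) * delta N) at_top sequentially"
  shows "(\<lambda>N. measure M {w \<in> space M.
            argmin_upto (gaic_known (C N) sg (2 + delta N) N (spiked_X k lam u sg g N w)) q = k})
           \<longlonglongrightarrow> 1
       \<and> (\<lambda>N. measure M {w \<in> space M.
            argmin_upto (gaic_unknown (C N) (2 + delta N) N (spiked_X k lam u sg g N w)) q = k})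
           \<longlonglongrightarrow> 1"
proof -
  interpret P: prob_space M by (rule M)
  define X where "X N w = spiked_X k lam u sg g N w" for N w
  define ell where "ell N w i = eig (X N w) i" for N w i
  define psi where "psi i = lam i + sg\<^sup>2 / lam i" for i
  define L where "L = (\<Sum>t\<in>{1..k}. (lam t)\<^sup>2)"
  define K where "K = 8 * sg\<^sup>2 * L + 8 * sg ^ 4"
  define F where "F N w = (\<Sum>i<N. \<Sum>j<N. (X N w $$ (i,j))\<^sup>2)" for N w
  have L0: "0 \<le> L" unfolding L_def by (simp add: sum_nonneg)
  have Xc: "X N w \<in> carrier_mat N N" for N w unfolding X_def spiked_X_def by simp
  have Xsym: "X N w $$ (i,j) = X N w $$ (j,i)" if "i < N" "j < N" for N w i j
    using that unfolding X_def spiked_X_def by (simp add: min.commute max.commute mult_ac)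
  have FT: "F N w = tail_sq N (X N w) 0" for N w
    unfolding F_def by (rule sym_eigs(2)[OF Xc Xsym, symmetric])
  have eigm[measurable]: "(\<lambda>w. eig (X N w) i) \<in> borel_measurable M" for N i
    unfolding X_def by (rule eig_meas)
  have ellm[measurable]: "(\<lambda>w. ell N w i) \<in> borel_measurable M" for N i
    unfolding ell_def by (rule eigm)
  have tailm[measurable]: "(\<lambda>w. tail_sq N (X N w) j) \<in> borel_measurable M" for N j
    unfolding tail_sq_def by measurable
  have Fm[measurable]: "(\<lambda>w. F N w) \<in> borel_measurable M" for N
    unfolding FT by measurable
  have psi_gt: "2 * sg < psi i" if "i \<in> {1..k}" for i
  proof -
    have l: "sg < lam i" using lam_gt[OF that] .
    have lp: "0 < lam i" using l sigma_pos by linarith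
    have "psi i - 2 * sg = (lam i - sg)\<^sup>2 / lam i"
      unfolding psi_def using lp by (simp add: field_simps power2_eq_square)
    moreover have "0 < (lam i - sg)\<^sup>2 / lam i" using l lp by simp
    ultimately show ?thesis by linarith
  qed
  define m where "m = Min (insert (3 * sg) (psi ` {1..k}))"
  have m_gt: "2 * sg < m" unfolding m_def using psi_gt sigma_pos by auto
  have m_le: "m \<le> psi i" if "i \<in> {1..k}" for i unfolding m_def using that by (intro Min_le) auto
  define eta where "eta = min 1 ((m - 2 * sg) / (2 * (1 + 2 * sg)))"
  have eta0: "0 < eta" unfolding eta_def using m_gt sigma_pos by simp
  have eta1: "eta \<le> 1" unfolding eta_def by simp
  have mm: "2 * sg * (1 + eta) < m - eta"
  proof -
    have "eta \<le> (m - 2 * sg) / (2 * (1 + 2 * sg))" unfolding eta_def by simp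
    then have "eta * (2 * (1 + 2 * sg)) \<le> m - 2 * sg" using sigma_pos by (simp add: field_simps)
    then show ?thesis using m_gt by (simp add: algebra_simps)
  qed
  define R where "R = (\<Sum>i\<in>{1..k}. (\<bar>psi i\<bar> + eta)\<^sup>2) + real q * (9 * sg\<^sup>2)"
  define Bs where "Bs i N = {w\<in>space M. eta \<le> \<bar>ell N w i - psi i\<bar>}" for i N
  define Y where "Y j N w = real N powr (2/3) * (ell N w j - 2 * sg)" for j N w
  define t where "t N = real N powr (2/3) * delta N * (sg / 16)" for N
  define Bb where "Bb j N = {w\<in>space M. t N \<le> \<bar>Y j N w\<bar>}" for j N
  define r where "r N = (real N + 1) * sg\<^sup>2 * delta N / 16" for N
  define BF where "BF N = {w\<in>space M. r N \<le> \<bar>F N w - (L + sg\<^sup>2 * (real N + 1))\<bar>}" for N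
  define Bad where "Bad N = (\<Union>i\<in>{1..k}. Bs i N) \<union> (\<Union>j\<in>{k+1..q}. Bb j N) \<union> BF N" for N
  have Ym[measurable]: "Y j N \<in> borel_measurable M" for j N unfolding Y_def by measurable
  have Bs_sets: "Bs i N \<in> sets M" for i N unfolding Bs_def by measurable
  have Bb_sets: "Bb j N \<in> sets M" for j N unfolding Bb_def by measurable
  have BF_sets: "BF N \<in> sets M" for N unfolding BF_def by measurable
  have Bad_sets: "Bad N \<in> sets M" for N unfolding Bad_def using Bs_sets Bb_sets BF_sets by auto
  have P1: "(\<lambda>N. measure M (Bs i N)) \<longlonglongrightarrow> 0" if "i \<in> {1..k}" for i
  proof -
    have "AE w in M. (\<lambda>N. ell N w i) \<longlonglongrightarrow> psi i"
      using lim_spike[OF that] unfolding ell_def X_def psi_def .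
    then show ?thesis unfolding Bs_def
      by (rule ae_conv_prob[where X="\<lambda>N w. ell N w i", OF M ellm _ eta0])
  qed
  have tlim: "filterlim t at_top sequentially"
    unfolding t_def using sigma_pos
    by (intro filterlim_at_top_mult_tendsto_pos[OF tendsto_const _ delta_big]) simp
  have P2: "(\<lambda>N. measure M (Bb j N)) \<longlonglongrightarrow> 0" if "j \<in> {k+1..q}" for j
  proof -
    have jk: "k < j" using that by simp
    have wc: "weak_conv_m (\<lambda>N. distr M borel (Y j N)) (TW (j - k))"
      using lim_TW[OF jk] unfolding Y_def ell_def X_def .
    have tw: "real_distribution (TW (j - k))" using TW_distr jk by simp
    show ?thesis unfolding Bb_def by (rule weak_conv_tail[OF M Ym wc tw tlim])
  qed
  have pw: "real N powr (2/3) \<le> real N + 1" for N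
  proof (cases "N = 0")
    case True then show ?thesis by simp
  next
    case False
    then have "1 \<le> real N" by simp
    then have "real N powr (2/3) \<le> real N powr 1" by (intro powr_mono) auto
    then show ?thesis using False by simp
  qed
  have dpos: "\<forall>\<^sub>F N in sequentially. 0 < delta N"
  proof -
    have "\<forall>\<^sub>F N in sequentially. 0 < real N powr (2/3) * delta N"
      using delta_big by (simp add: filterlim_at_top_dense)
    then show ?thesis
    proof eventually_elim
      case (elim N)
      have "0 \<le> real N powr (2/3)" by simp
      then show ?case using elim by (metis mult_nonneg_nonpos not_le)
    qed
  qed
  have rlim: "filterlim r at_top sequentially"
  proof (rule filterlim_at_top_mono[OF filterlim_at_top_mult_tendsto_pos[OF tendsto_const _ delta_big]])
    show "0 < sg\<^sup>2 / 16" using sigma_pos by simp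
    show "\<forall>\<^sub>F N in sequentially. real N powr (2/3) * delta N * (sg\<^sup>2 / 16) \<le> r N"
      using dpos
    proof eventually_elim
      case (elim N)
      have "real N powr (2/3) * delta N \<le> (real N + 1) * delta N"
        using pw[of N] elim by (intro mult_right_mono) auto
      then have "real N powr (2/3) * delta N * (sg\<^sup>2 / 16) \<le> (real N + 1) * delta N * (sg\<^sup>2 / 16)"
        by (rule mult_right_mono) simp
      then show ?case unfolding r_def by (simp add: field_simps)
    qed
  qed
  have Kr: "(\<lambda>N. K / (r N)\<^sup>2) \<longlonglongrightarrow> 0"
  proof -
    have "filterlim (\<lambda>N. r N * r N) at_top sequentially"
      by (rule filterlim_at_top_mult_at_top[OF rlim rlim])
    then have "filterlim (\<lambda>N. (r N)\<^sup>2) at_infinity sequentially"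
      by (simp add: power2_eq_square filterlim_at_top_imp_at_infinity)
    then show ?thesis by (rule tendsto_divide_0[OF tendsto_const])
  qed
  have P3: "(\<lambda>N. measure M (BF N)) \<longlonglongrightarrow> 0"
  proof (rule tendsto_sandwich[OF _ _ tendsto_const Kr])
    show "\<forall>\<^sub>F N in sequentially. 0 \<le> measure M (BF N)" by simp
    have "\<forall>\<^sub>F N in sequentially. 0 < r N" using rlim by (simp add: filterlim_at_top_dense)
    moreover have "\<forall>\<^sub>F N in sequentially. max 1 k \<le> N" by (rule eventually_ge_at_top)
    ultimately show "\<forall>\<^sub>F N in sequentially. measure M (BF N) \<le> K / (r N)\<^sup>2"
    proof eventually_elim
      case (elim N)
      have kN: "k \<le> N" and N1: "1 \<le> N" using elim by auto
      show ?case
        unfolding BF_def F_def X_def K_def L_def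
        by (rule frob_conc[where M=M and g=g and N=N and k=k and u=u and lam=lam and sg=sg,
              OF M g_indep g_off g_diag u_orth[OF kN] N1 elim(1)])
    qed
  qed
  have PBad: "(\<lambda>N. measure M (Bad N)) \<longlonglongrightarrow> 0"
  proof (rule tendsto_sandwich[OF _ _ tendsto_const])
    show "\<forall>\<^sub>F N in sequentially. 0 \<le> measure M (Bad N)" by simp
    show "\<forall>\<^sub>F N in sequentially. measure M (Bad N) \<le>
        (\<Sum>i\<in>{1..k}. measure M (Bs i N)) + (\<Sum>j\<in>{k+1..q}. measure M (Bb j N)) + measure M (BF N)"
    proof (intro always_eventually allI)
      fix N
      have u1: "(\<Union>i\<in>{1..k}. Bs i N) \<in> sets M" using Bs_sets by auto
      have u2: "(\<Union>j\<in>{k+1..q}. Bb j N) \<in> sets M" using Bb_sets by auto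
      have "measure M (Bad N) \<le> measure M ((\<Union>i\<in>{1..k}. Bs i N) \<union> (\<Union>j\<in>{k+1..q}. Bb j N)) + measure M (BF N)"
        unfolding Bad_def using u1 u2 BF_sets by (intro measure_Un_le) auto
      also have "measure M ((\<Union>i\<in>{1..k}. Bs i N) \<union> (\<Union>j\<in>{k+1..q}. Bb j N))
          \<le> measure M (\<Union>i\<in>{1..k}. Bs i N) + measure M (\<Union>j\<in>{k+1..q}. Bb j N)"
        using u1 u2 by (rule measure_Un_le)
      also have "measure M (\<Union>i\<in>{1..k}. Bs i N) \<le> (\<Sum>i\<in>{1..k}. measure M (Bs i N))"
        using Bs_sets by (intro P.finite_measure_subadditive_finite) auto
      also have "measure M (\<Union>j\<in>{k+1..q}. Bb j N) \<le> (\<Sum>j\<in>{k+1..q}. measure M (Bb j N))"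
        using Bb_sets by (intro P.finite_measure_subadditive_finite) auto
      finally show "measure M (Bad N) \<le>
        (\<Sum>i\<in>{1..k}. measure M (Bs i N)) + (\<Sum>j\<in>{k+1..q}. measure M (Bb j N)) + measure M (BF N)"
        by simp
    qed
    have "(\<lambda>N. (\<Sum>i\<in>{1..k}. measure M (Bs i N)) + (\<Sum>j\<in>{k+1..q}. measure M (Bb j N)) + measure M (BF N))
        \<longlonglongrightarrow> 0 + 0 + 0"
      by (intro tendsto_add tendsto_null_sum P1 P2 P3)
    then show "(\<lambda>N. (\<Sum>i\<in>{1..k}. measure M (Bs i N)) + (\<Sum>j\<in>{k+1..q}. measure M (Bb j N)) + measure M (BF N))
        \<longlonglongrightarrow> 0" by simp
  qed
  have pw1: "real N powr (2/3) \<le> real N" if "1 \<le> N" for N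
  proof -
    have "1 \<le> real N" using that by simp
    then have "real N powr (2/3) \<le> real N powr 1" by (intro powr_mono) auto
    then show ?thesis using that by simp
  qed
  have sg2: "0 < sg\<^sup>2" using sigma_pos by simp
  have ev: "\<forall>\<^sub>F N in sequentially. q + 1 \<le> N \<and> 0 < delta N \<and> delta N \<le> eta \<and>
      16 * real q \<le> real N * delta N \<and> R \<le> (real N + 1) * sg\<^sup>2 * delta N / 16 \<and>
      2 * L \<le> (real N + 1) * sg\<^sup>2 * eta"
  proof -
    have e1: "\<forall>\<^sub>F N in sequentially. q + 1 \<le> N" by (rule eventually_ge_at_top)
    have e3: "\<forall>\<^sub>F N in sequentially. delta N < eta" using delta_lim eta0 by (rule order_tendstoD)
    have "\<forall>Z. \<forall>\<^sub>F N in sequentially. Z < real N powr (2/3) * delta N"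
      using delta_big by (simp add: filterlim_at_top_dense)
    then have e4: "\<forall>\<^sub>F N in sequentially. max (16 * real q) (16 * R / sg\<^sup>2) < real N powr (2/3) * delta N"
      by blast
    have "\<forall>Z. \<forall>\<^sub>F N in sequentially. Z \<le> real N"
      using filterlim_real_sequentially by (simp add: filterlim_at_top)
    then have e6: "\<forall>\<^sub>F N in sequentially. 2 * L / (sg\<^sup>2 * eta) \<le> real N" by blast
    show ?thesis using e1 e3 e4 e6 dpos
    proof eventually_elim
      case (elim N)
      have N1: "1 \<le> N" using elim by simp
      have a: "real N powr (2/3) * delta N \<le> real N * delta N"
        using pw1[OF N1] elim by (intro mult_right_mono) auto
      have b: "16 * real q \<le> real N * delta N" using elim a by linarith
      have c0: "16 * R / sg\<^sup>2 < real N * delta N" using elim a by linarith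
      then have "16 * R < real N * delta N * sg\<^sup>2" using sg2 by (simp add: divide_less_eq)
      moreover have "real N * delta N * sg\<^sup>2 \<le> (real N + 1) * delta N * sg\<^sup>2"
        using elim sg2 by (intro mult_right_mono) auto
      ultimately have c: "R \<le> (real N + 1) * sg\<^sup>2 * delta N / 16" by (simp add: mult_ac)
      have "2 * L \<le> real N * (sg\<^sup>2 * eta)" using elim sg2 eta0 by (simp add: divide_le_eq mult_ac)
      moreover have "real N * (sg\<^sup>2 * eta) \<le> (real N + 1) * (sg\<^sup>2 * eta)"
        using sg2 eta0 by (intro mult_right_mono) auto
      ultimately have d: "2 * L \<le> (real N + 1) * sg\<^sup>2 * eta" by (simp add: mult_ac)
      show ?case using elim b c d by simp
    qed
  qed
  have good: "\<forall>\<^sub>F N in sequentially. \<forall>w\<in>space M - Bad N.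
      argmin_upto (gaic_known (C N) sg (2 + delta N) N (X N w)) q = k \<and>
      argmin_upto (gaic_unknown (C N) (2 + delta N) N (X N w)) q = k"
    using ev
  proof eventually_elim
    case (elim N)
    show ?case
    proof
      fix w assume w: "w \<in> space M - Bad N"
      have N1: "1 \<le> N" using elim by simp
      have Np: "0 < real N powr (2/3)" using N1 by simp
      have spike: "\<bar>eig (X N w) i - psi i\<bar> < eta" if "i \<in> {1..k}" for i
      proof -
        have "w \<notin> Bs i N" using w that unfolding Bad_def by blast
        then show ?thesis using w unfolding Bs_def ell_def by auto
      qed
      have bulk: "\<bar>eig (X N w) j - 2 * sg\<bar> < sg * delta N / 16" if "j \<in> {k+1..q}" for j
      proof -
        have "w \<notin> Bb j N" using w that unfolding Bad_def by blast
        then have "\<bar>Y j N w\<bar> < t N" using w unfolding Bb_def by auto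
        then have "real N powr (2/3) * \<bar>eig (X N w) j - 2 * sg\<bar> < real N powr (2/3) * (sg * delta N / 16)"
          unfolding Y_def t_def ell_def using Np by (simp add: abs_mult mult_ac)
        then show ?thesis using Np by simp
      qed
      have Fb: "\<bar>F N w - (L + sg\<^sup>2 * (real N + 1))\<bar> < r N" using w unfolding Bad_def BF_def by auto
      have Flow: "(real N + 1) * sg\<^sup>2 * (1 - delta N / 16) \<le> F N w"
      proof -
        have "(real N + 1) * sg\<^sup>2 * (1 - delta N / 16) = sg\<^sup>2 * (real N + 1) - r N"
          unfolding r_def by (simp add: algebra_simps)
        then show ?thesis using Fb L0 by linarith
      qed
      have Fup: "F N w \<le> (real N + 1) * sg\<^sup>2 * (1 + eta)"
      proof -
        have "r N \<le> (real N + 1) * sg\<^sup>2 * eta / 2"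
        proof -
          have "delta N / 16 \<le> eta / 2" using elim eta0 by simp
          then have "(real N + 1) * sg\<^sup>2 * (delta N / 16) \<le> (real N + 1) * sg\<^sup>2 * (eta / 2)"
            using sg2 by (intro mult_left_mono) auto
          then show ?thesis unfolding r_def by simp
        qed
        moreover have "(real N + 1) * sg\<^sup>2 * (1 + eta) = sg\<^sup>2 * (real N + 1) + (real N + 1) * sg\<^sup>2 * eta"
          by (simp add: algebra_simps)
        ultimately show ?thesis using Fb elim by linarith
      qed
      have Rb: "(\<Sum>i\<in>{1..k}. (\<bar>psi i\<bar> + eta)\<^sup>2) + real q * (9 * sg\<^sup>2) \<le> (real N + 1) * sg\<^sup>2 * delta N / 16"
        using elim unfolding R_def by simp
      have dd: "0 < delta N" "delta N \<le> eta" using elim by auto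
      show "argmin_upto (gaic_known (C N) sg (2 + delta N) N (X N w)) q = k \<and>
          argmin_upto (gaic_unknown (C N) (2 + delta N) N (X N w)) q = k"
        by (rule good_argmin[OF Xc Xsym sigma_pos kq _ dd eta1 mm m_le spike bulk
              Flow[unfolded F_def] Fup[unfolded F_def] Rb])
          (use elim in auto)
    qed
  qed
  have gkm[measurable]: "(\<lambda>w. gaic_known c s gm N (X N w) j) \<in> borel_measurable M" for c s gm N j
    unfolding gaic_known_def by measurable
  have gum[measurable]: "(\<lambda>w. gaic_unknown c gm N (X N w) j) \<in> borel_measurable M" for c gm N j
    unfolding gaic_unknown_def sigma_hat_sq_def by measurable
  define S1 where "S1 N = {w\<in>space M. argmin_upto (gaic_known (C N) sg (2 + delta N) N (X N w)) q = k}" for N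
  define S2 where "S2 N = {w\<in>space M. argmin_upto (gaic_unknown (C N) (2 + delta N) N (X N w)) q = k}" for N
  have S1_sets: "S1 N \<in> sets M" for N unfolding S1_def argmin_iff by measurable
  have S2_sets: "S2 N \<in> sets M" for N unfolding S2_def argmin_iff by measurable
  have lim1: "(\<lambda>N. 1 - measure M (Bad N)) \<longlonglongrightarrow> 1"
    using tendsto_diff[OF tendsto_const PBad, of 1] by simp
  have comp: "measure M (space M - Bad N) = 1 - measure M (Bad N)" for N
    using P.prob_compl[OF Bad_sets] .
  have T1: "(\<lambda>N. measure M (S1 N)) \<longlonglongrightarrow> 1"
  proof (rule tendsto_sandwich[OF _ _ lim1 tendsto_const])
    show "\<forall>\<^sub>F N in sequentially. 1 - measure M (Bad N) \<le> measure M (S1 N)"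
      using good
    proof eventually_elim
      case (elim N)
      have "space M - Bad N \<subseteq> S1 N" using elim unfolding S1_def by auto
      then have "measure M (space M - Bad N) \<le> measure M (S1 N)"
        using S1_sets by (intro P.finite_measure_mono) auto
      then show ?case using comp by simp
    qed
    show "\<forall>\<^sub>F N in sequentially. measure M (S1 N) \<le> 1" by simp
  qed
  have T2: "(\<lambda>N. measure M (S2 N)) \<longlonglongrightarrow> 1"
  proof (rule tendsto_sandwich[OF _ _ lim1 tendsto_const])
    show "\<forall>\<^sub>F N in sequentially. 1 - measure M (Bad N) \<le> measure M (S2 N)"
      using good
    proof eventually_elim
      case (elim N)
      have "space M - Bad N \<subseteq> S2 N" using elim unfolding S2_def by auto
      then have "measure M (space M - Bad N) \<le> measure M (S2 N)"
        using S2_sets by (intro P.finite_measure_mono) auto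
      then show ?case using comp by simp
    qed
    show "\<forall>\<^sub>F N in sequentially. measure M (S2 N) \<le> 1" by simp
  qed
  show ?thesis using T1 T2 unfolding S1_def S2_def X_def by simp
qed

end
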